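(* Let $0<\gamma<n$, let $\vec p,\vec q,\vec s$ be $n$-tuples with $1<p_i,q_i<\infty$ and $1<s_i\le\infty$, and let $\frac1n\sum_{i=1}^n\frac1{s_i}\le\frac1\alpha\le\frac1n\sum_{i=1}^n\frac1{p_i}$ and $\frac1n\sum_{i=1}^n\frac1{s_i}\le\frac1\beta\le\frac1n\sum_{i=1}^n\frac1{q_i}$. Assume $\gamma=\sum_{i=1}^n\frac1{p_i}-\sum_{i=1}^n\frac1{q_i}=\frac n\alpha-\frac n\beta$. Let $b$ be locally integrable. If the commutator $[b,I_\gamma]$ is bounded from $(L^{\vec p},L^{\vec s})^{\alpha}(\mathbb R^n)$ to $(L^{\vec q},L^{\vec s})^{\beta}(\mathbb R^n)$, then $b\in BMO(\mathbb R^n)$.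
   Context: $I_\gamma f(x)=C_\gamma\int_{\mathbb R^n}\frac{f(y)}{|x-y|^{n-\gamma}}\,dy$ ($C_\gamma>0$ a normalizing constant), and $[b,I_\gamma]f(x)=b(x)I_\gamma f(x)-I_\gamma(bf)(x)=C_\gamma\int_{\mathbb R^n}\frac{(b(x)-b(y))f(y)}{|x-y|^{n-\gamma}}dy$. $BMO(\mathbb R^n)$ is the space of locally integrable $b$ with $\|b\|_{BMO}=\sup_B\frac1{|B|}\int_B|b(y)-b_B|\,dy<\infty$, the supremum over all balls $B$, $b_B=\frac1{|B|}\int_Bb$. For $\vec p=(p_1,\dots,p_n)$, $\|f\|_{L^{\vec p}}=\Big(\int_{\mathbb R}\cdots\Big(\int_{\mathbb R}|f(x)|^{p_1}\,dx_1\Big)^{p_2/p_1}\cdots dx_n\Big)^{1/p_n}$ (usual modification when some exponent is $\infty$). $B(y,r)$ is the open ball of center $y$, radius $r$. $(L^{\vec p},L^{\vec s})^{\alpha}(\mathbb R^n)$ is the set of $f\in L^1_{loc}(\mathbb R^n)$ with $$\|f\|_{(L^{\vec p},L^{\vec s})^{\alpha}}:=\sup_{r>0}\Big\|\,y\mapsto |B(y,r)|^{\frac1\alpha-\frac1n\sum_{i=1}^n\frac1{p_i}-\frac1n\sum_{i=1}^n\frac1{s_i}}\,\|f\chi_{B(y,r)}\|_{L^{\vec p}}\Big\|_{L^{\vec s}}<\infty,$$ the outer $L^{\vec s}$-norm taken in $y$. *)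

theory Defs
  imports "HOL-Probability.Probability"
begin

text \<open>Euclidean space R^n, realised as functions nat => real that are
  extensional on the coordinate set {..<n} (coordinate i of the paper is index i-1),
  with the n-fold product of Lebesgue-Borel measure.\<close>

definition Rn :: "nat \<Rightarrow> (nat \<Rightarrow> real) measure" where
  "Rn n = PiM {..<n} (\<lambda>_. lborel)"

definition edist :: "nat \<Rightarrow> (nat \<Rightarrow> real) \<Rightarrow> (nat \<Rightarrow> real) \<Rightarrow> real" where
  "edist n x y = sqrt (\<Sum>i<n. (x i - y i)^2)"

definition eball :: "nat \<Rightarrow> (nat \<Rightarrow> real) \<Rightarrow> real \<Rightarrow> (nat \<Rightarrow> real) set" where
  "eball n y r = {x \<in> space (Rn n). edist n x y < r}"

definition vol :: "nat \<Rightarrow> (nat \<Rightarrow> real) set \<Rightarrow> real" where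
  "vol n A = measure (Rn n) A"

definition inv_exp :: "ennreal \<Rightarrow> real" where
  "inv_exp p = (if p = \<infinity> then 0 else 1 / enn2real p)"

definition avg_inv :: "nat \<Rightarrow> (nat \<Rightarrow> ennreal) \<Rightarrow> real" where
  "avg_inv n p = (1 / real n) * (\<Sum>i<n. inv_exp (p i))"

definition epow :: "ennreal \<Rightarrow> real \<Rightarrow> ennreal" where
  "epow x r = (if x = \<infinity> then \<infinity> else ennreal (enn2real x powr r))"

text \<open>Iterated mixed norm: first integrate in coordinate 0 (x_1) with exponent p 0,
  then coordinate 1, etc.  mixed_aux p g k x depends only on the coordinates >= k of x.\<close>
fun mixed_aux :: "(nat \<Rightarrow> ennreal) \<Rightarrow> ((nat \<Rightarrow> real) \<Rightarrow> ennreal) \<Rightarrow> nat \<Rightarrow> (nat \<Rightarrow> real) \<Rightarrow> ennreal" where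
  "mixed_aux p g 0 x = g x"
| "mixed_aux p g (Suc k) x =
     (if p k = \<infinity> then esssup lborel (\<lambda>t. mixed_aux p g k (x(k := t)))
      else epow (\<integral>\<^sup>+ t. epow (mixed_aux p g k (x(k := t))) (enn2real (p k)) \<partial>lborel)
                (1 / enn2real (p k)))"

definition mixed_norm :: "nat \<Rightarrow> (nat \<Rightarrow> ennreal) \<Rightarrow> ((nat \<Rightarrow> real) \<Rightarrow> ennreal) \<Rightarrow> ennreal" where
  "mixed_norm n p g = mixed_aux p g n (\<lambda>_. undefined)"

definition amalgam_norm :: "nat \<Rightarrow> (nat \<Rightarrow> ennreal) \<Rightarrow> (nat \<Rightarrow> ennreal) \<Rightarrow> real \<Rightarrow> ((nat \<Rightarrow> real) \<Rightarrow> real) \<Rightarrow> ennreal" where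
  "amalgam_norm n p s \<alpha> f =
     (SUP r\<in>{0<..}. mixed_norm n s (\<lambda>y.
        ennreal (vol n (eball n y r) powr (1/\<alpha> - avg_inv n p - avg_inv n s))
        * mixed_norm n p (\<lambda>x. ennreal (indicator (eball n y r) x * \<bar>f x\<bar>))))"

text \<open>Local integrability: integrable on every ball (equivalently every compact set).\<close>
definition loc_int :: "nat \<Rightarrow> ((nat \<Rightarrow> real) \<Rightarrow> real) \<Rightarrow> bool" where
  "loc_int n b = (\<forall>y\<in>space (Rn n). \<forall>r>0. set_integrable (Rn n) (eball n y r) b)"

definition in_amalgam :: "nat \<Rightarrow> (nat \<Rightarrow> ennreal) \<Rightarrow> (nat \<Rightarrow> ennreal) \<Rightarrow> real \<Rightarrow> ((nat \<Rightarrow> real) \<Rightarrow> real) \<Rightarrow> bool" where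
  "in_amalgam n p s \<alpha> f = (loc_int n f \<and> amalgam_norm n p s \<alpha> f < \<infinity>)"

definition commutator :: "nat \<Rightarrow> real \<Rightarrow> real \<Rightarrow> ((nat \<Rightarrow> real) \<Rightarrow> real) \<Rightarrow> ((nat \<Rightarrow> real) \<Rightarrow> real) \<Rightarrow> (nat \<Rightarrow> real) \<Rightarrow> real" where
  "commutator n C \<gamma> b f x =
     C * (\<integral> y. (b x - b y) * f y / edist n x y powr (real n - \<gamma>) \<partial>Rn n)"

definition ball_avg :: "nat \<Rightarrow> ((nat \<Rightarrow> real) \<Rightarrow> real) \<Rightarrow> (nat \<Rightarrow> real) set \<Rightarrow> real" where
  "ball_avg n b B = (1 / vol n B) * (\<integral> x \<in> B. b x \<partial>Rn n)"

definition BMO :: "nat \<Rightarrow> ((nat \<Rightarrow> real) \<Rightarrow> real) \<Rightarrow> bool" where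
  "BMO n b = (loc_int n b \<and> (\<exists>M. \<forall>y\<in>space (Rn n). \<forall>r>0.
      (1 / vol n (eball n y r)) * (\<integral> x \<in> eball n y r. \<bar>b x - ball_avg n b (eball n y r)\<bar> \<partial>Rn n) \<le> M))"

end

theory Submission
  imports Defs
begin

lemma space_Rn: "space (Rn n) = PiE {..<n} (\<lambda>_. UNIV)"
  by (simp add: Rn_def space_PiM)

lemma sets_Rn[measurable_cong]: "sets (Rn n) = sets (PiM {..<n} (\<lambda>_. lborel))"
  by (simp add: Rn_def)

lemma psf: "product_sigma_finite (\<lambda>_. lborel)"
  by (simp add: product_sigma_finite_def lborel.sigma_finite_measure_axioms)

lemma sf_Rn: "sigma_finite_measure (Rn n)"
proof -
  interpret finite_product_sigma_finite "\<lambda>_. lborel" "{..<n}"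
    by (simp add: finite_product_sigma_finite_def psf finite_product_sigma_finite_axioms_def)
  show ?thesis unfolding Rn_def by (rule sigma_finite_measure_axioms)
qed

lemma comp_meas[measurable]: "i < n \<Longrightarrow> (\<lambda>x. x i) \<in> borel_measurable (Rn n)"
  unfolding Rn_def by measurable

lemma edist_meas[measurable]:
  assumes "f \<in> measurable M (Rn n)" "g \<in> measurable M (Rn n)"
  shows "(\<lambda>z. edist n (f z) (g z)) \<in> borel_measurable M"
proof -
  have "(\<lambda>z. \<Sum>i<n. (f z i - g z i)\<^sup>2) \<in> borel_measurable M"
  proof (intro borel_measurable_sum)
    fix i assume "i \<in> {..<n}"
    then have [measurable]: "(\<lambda>x. x i) \<in> borel_measurable (Rn n)" by simp
    show "(\<lambda>z. (f z i - g z i)\<^sup>2) \<in> borel_measurable M"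
      using assms by measurable
  qed
  then show ?thesis unfolding edist_def by measurable
qed

lemma upd_meas[measurable]:
  assumes "k < n"
  shows "(\<lambda>(x,t). x(k:=t)) \<in> measurable (Rn n \<Otimes>\<^sub>M lborel) (Rn n)"
  unfolding Rn_def
  apply (rule measurable_PiM_single')
  subgoal for i by (cases "i = k") (auto)
  using assms by (auto simp: space_pair_measure space_PiM PiE_def extensional_def)

lemma esssup_param_meas:
  fixes F :: "'a \<Rightarrow> real \<Rightarrow> ennreal"
  assumes F: "(\<lambda>(z,t). F z t) \<in> borel_measurable (M \<Otimes>\<^sub>M lborel)"
  shows "(\<lambda>z. esssup lborel (F z)) \<in> borel_measurable M"
proof (rule borel_measurableI_le)
  fix c :: ennreal
  let ?A = "{w \<in> space (M \<Otimes>\<^sub>M lborel). c < (\<lambda>(z,t). F z t) w}"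
  have A: "?A \<in> sets (M \<Otimes>\<^sub>M lborel)"
    using F by measurable
  have m: "(\<lambda>z. emeasure lborel (Pair z -` ?A)) \<in> borel_measurable M"
    by (rule lborel.measurable_emeasure_Pair[OF A])
  have eq: "{z \<in> space M. esssup lborel (F z) \<le> c} =
      {z \<in> space M. emeasure lborel (Pair z -` ?A) \<in> {0}}"
  proof (intro Collect_cong conj_cong refl)
    fix z assume z: "z \<in> space M"
    have Fz: "F z \<in> borel_measurable lborel"
      using measurable_Pair2[OF F z] by simp
    have pre: "Pair z -` ?A = {t \<in> space lborel. c < F z t}"
      using z by (auto simp: space_pair_measure)
    have "esssup lborel (F z) \<le> c \<longleftrightarrow> (AE t in lborel. F z t \<le> c)"
      using esssup_AE[where M=lborel and f="F z"] esssup_I[OF Fz]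
      by (auto elim: eventually_mono intro: order_trans)
    also have "\<dots> \<longleftrightarrow> emeasure lborel {t \<in> space lborel. c < F z t} = 0"
      using Fz by (subst AE_iff_measurable[OF _ refl]) (auto simp: not_le)
    finally show "esssup lborel (F z) \<le> c \<longleftrightarrow> emeasure lborel (Pair z -` ?A) \<in> {0}"
      using pre by simp
  qed
  show "{z \<in> space M. esssup lborel (F z) \<le> c} \<in> sets M"
  proof -
    have "(\<lambda>z. emeasure lborel (Pair z -` ?A)) -` {0} \<inter> space M \<in> sets M"
      by (rule measurable_sets[OF m]) simp
    moreover have "{z \<in> space M. emeasure lborel (Pair z -` ?A) \<in> {0}} =
        (\<lambda>z. emeasure lborel (Pair z -` ?A)) -` {0} \<inter> space M" by auto
    ultimately show ?thesis unfolding eq by simp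
  qed
qed

lemma epow_meas[measurable]:
  assumes [measurable]: "f \<in> borel_measurable M"
  shows "(\<lambda>x. epow (f x) r) \<in> borel_measurable M"
  unfolding epow_def by measurable

lemma mixed_meas:
  assumes H: "(\<lambda>(y,x). H y x) \<in> borel_measurable (N \<Otimes>\<^sub>M Rn n)"
  shows "k \<le> n \<Longrightarrow> (\<lambda>(y,x). mixed_aux p (H y) k x) \<in> borel_measurable (N \<Otimes>\<^sub>M Rn n)"
proof (induction k)
  case 0
  then show ?case using H by simp
next
  case (Suc k)
  then have kn: "k < n" by simp
  have IH: "(\<lambda>(y,x). mixed_aux p (H y) k x) \<in> borel_measurable (N \<Otimes>\<^sub>M Rn n)"
    using Suc by simp
  have phi: "(\<lambda>((y,x),t). (y, x(k:=t))) \<in> measurable ((N \<Otimes>\<^sub>M Rn n) \<Otimes>\<^sub>M lborel) (N \<Otimes>\<^sub>M Rn n)"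
  proof -
    have u: "(\<lambda>(x,t). x(k:=t)) \<in> measurable (Rn n \<Otimes>\<^sub>M lborel) (Rn n)" using upd_meas[OF kn] .
    have "(\<lambda>w. (fst (fst w), (\<lambda>(x,t). x(k:=t)) (snd (fst w), snd w))) \<in> measurable ((N \<Otimes>\<^sub>M Rn n) \<Otimes>\<^sub>M lborel) (N \<Otimes>\<^sub>M Rn n)"
      using u by measurable
    then show ?thesis by (simp add: case_prod_beta')
  qed
  have G: "(\<lambda>(z,t). mixed_aux p (H (fst z)) k ((snd z)(k:=t))) \<in> borel_measurable ((N \<Otimes>\<^sub>M Rn n) \<Otimes>\<^sub>M lborel)"
  proof -
    have "(\<lambda>(y,x). mixed_aux p (H y) k x) \<circ> (\<lambda>((y,x),t). (y, x(k:=t))) \<in> borel_measurable ((N \<Otimes>\<^sub>M Rn n) \<Otimes>\<^sub>M lborel)"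
      by (rule measurable_comp[OF phi IH])
    then show ?thesis by (simp add: o_def case_prod_beta')
  qed
  show ?case
  proof (cases "p k = \<infinity>")
    case True
    have "(\<lambda>z. esssup lborel (\<lambda>t. mixed_aux p (H (fst z)) k ((snd z)(k:=t)))) \<in> borel_measurable (N \<Otimes>\<^sub>M Rn n)"
      by (rule esssup_param_meas[OF G])
    then show ?thesis using True by (simp add: case_prod_beta')
  next
    case False
    have G2: "(\<lambda>(z,t). epow (mixed_aux p (H (fst z)) k ((snd z)(k:=t))) (enn2real (p k))) \<in> borel_measurable ((N \<Otimes>\<^sub>M Rn n) \<Otimes>\<^sub>M lborel)"
      using G by (simp add: case_prod_beta')
    have "(\<lambda>z. \<integral>\<^sup>+ t. epow (mixed_aux p (H (fst z)) k ((snd z)(k:=t))) (enn2real (p k)) \<partial>lborel) \<in> borel_measurable (N \<Otimes>\<^sub>M Rn n)"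
      using lborel.borel_measurable_nn_integral[OF G2] .
    then have "(\<lambda>z. epow (\<integral>\<^sup>+ t. epow (mixed_aux p (H (fst z)) k ((snd z)(k:=t))) (enn2real (p k)) \<partial>lborel) (1 / enn2real (p k))) \<in> borel_measurable (N \<Otimes>\<^sub>M Rn n)"
      by measurable
    then show ?thesis using False by (simp add: case_prod_beta')
  qed
qed

lemma mixed_meas1:
  assumes H: "H \<in> borel_measurable (Rn n)" and "k \<le> n"
  shows "mixed_aux p H k \<in> borel_measurable (Rn n)"
proof -
  have "(\<lambda>(y,x). H x) \<in> borel_measurable (Rn n \<Otimes>\<^sub>M Rn n)" using H by measurable
  from mixed_meas[OF this assms(2), of p]
  have m: "(\<lambda>(y,x). mixed_aux p H k x) \<in> borel_measurable (Rn n \<Otimes>\<^sub>M Rn n)" by simp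
  have "(\<lambda>(y,x). mixed_aux p H k x) \<circ> (\<lambda>x. (x,x)) \<in> borel_measurable (Rn n)"
    by (rule measurable_comp[OF _ m]) measurable
  then show ?thesis by (simp add: o_def)
qed

lemma upd_t_meas:
  assumes F: "F \<in> borel_measurable (Rn n)" and x: "x \<in> space (Rn n)" and k: "k < n"
  shows "(\<lambda>t. F (x(k:=t))) \<in> borel_measurable lborel"
proof -
  have "(\<lambda>t. (x,t)) \<in> measurable lborel (Rn n \<Otimes>\<^sub>M lborel)" using x by measurable
  from measurable_comp[OF this upd_meas[OF k]]
  have "(\<lambda>t. x(k:=t)) \<in> measurable lborel (Rn n)" by (simp add: o_def)
  from measurable_comp[OF this F] show ?thesis by (simp add: o_def)
qed

lemma upd_space: "x \<in> space (Rn n) \<Longrightarrow> k < n \<Longrightarrow> x(k:=t) \<in> space (Rn n)"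
  by (auto simp: space_Rn PiE_def extensional_def)

lemma epow_mono: "a \<le> b \<Longrightarrow> 0 \<le> r \<Longrightarrow> epow a r \<le> epow b r"
  unfolding epow_def
  by (cases a; cases b) (auto simp: top_unique intro!: ennreal_leI powr_mono2)

lemma epow_ennreal: "0 \<le> v \<Longrightarrow> epow (ennreal v) r = ennreal (v powr r)"
  by (simp add: epow_def)

lemma mixed_mono:
  assumes le: "\<And>x. G x \<le> F x" and G: "G \<in> borel_measurable (Rn n)"
  shows "k \<le> n \<Longrightarrow> x \<in> space (Rn n) \<Longrightarrow> mixed_aux p G k x \<le> mixed_aux p F k x"
proof (induction k arbitrary: x)
  case 0
  then show ?case using le by simp
next
  case (Suc k)
  then have kn: "k < n" by simp
  have IH: "\<And>t. mixed_aux p G k (x(k:=t)) \<le> mixed_aux p F k (x(k:=t))"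
    using Suc upd_space[OF Suc(3) kn] by simp
  show ?case
  proof (cases "p k = \<infinity>")
    case True
    have "(\<lambda>t. mixed_aux p G k (x(k:=t))) \<in> borel_measurable lborel"
      by (rule upd_t_meas[OF mixed_meas1[OF G] Suc(3) kn]) (use kn in simp)
    then show ?thesis using True IH by (simp add: esssup_mono)
  next
    case False
    have "(\<integral>\<^sup>+ t. epow (mixed_aux p G k (x(k:=t))) (enn2real (p k)) \<partial>lborel)
       \<le> (\<integral>\<^sup>+ t. epow (mixed_aux p F k (x(k:=t))) (enn2real (p k)) \<partial>lborel)"
      by (intro nn_integral_mono epow_mono IH) simp
    then show ?thesis using False by (simp add: epow_mono)
  qed
qed

lemma esssup_ind:
  fixes a b :: real and c :: ennreal
  assumes ab: "a < b"
  shows "esssup lborel (\<lambda>t. c * indicator {a<..<b} t) = c"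
proof (rule antisym)
  have m: "(\<lambda>t. c * indicator {a<..<b} t) \<in> borel_measurable lborel" by measurable
  show "esssup lborel (\<lambda>t. c * indicator {a<..<b} t) \<le> c"
    by (rule esssup_I[OF m]) (auto simp: indicator_def)
  show "c \<le> esssup lborel (\<lambda>t. c * indicator {a<..<b} t)"
    unfolding esssup_eq[OF m]
  proof (rule Inf_greatest, rule ccontr)
    fix z assume z: "z \<in> {z. emeasure lborel {x \<in> space lborel. z < c * indicator {a<..<b} x} = 0}"
      and nz: "\<not> c \<le> z"
    have "{a<..<b} \<subseteq> {x \<in> space lborel. z < c * indicator {a<..<b} x}"
      using nz by (auto simp: not_le)
    then have "emeasure lborel {a<..<b} \<le> 0"
      using z emeasure_mono[of "{a<..<b}" "{x \<in> space lborel. z < c * indicator {a<..<b} x}" lborel]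
      by auto
    then show False using ab by simp
  qed
qed

definition boxf :: "nat \<Rightarrow> real \<Rightarrow> (nat\<Rightarrow>real) \<Rightarrow> (nat\<Rightarrow>real) \<Rightarrow> (nat\<Rightarrow>real) \<Rightarrow> ennreal" where
  "boxf n c a b x = ennreal (c * (\<Prod>i<n. indicator {a i<..<b i} (x i)))"

lemma epow_0[simp]: "epow 0 r = 0"
  by (simp add: epow_def)

lemma powr_self_inv: "0 \<le> v \<Longrightarrow> 0 < P \<Longrightarrow> (v powr P) powr (1/P) = (v::real)"
  by (cases "v = 0") (auto simp: powr_powr)

lemma mixed_box:
  assumes c: "c \<ge> 0" and ab: "\<forall>i<n. a i < b i" and pp: "\<forall>i<n. 0 < p i"
  shows "k \<le> n \<Longrightarrow> mixed_aux p (boxf n c a b) k x =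
    ennreal (c * (\<Prod>i<k. (b i - a i) powr inv_exp (p i)) * (\<Prod>i\<in>{k..<n}. indicator {a i<..<b i} (x i)))"
proof (induction k arbitrary: x)
  case 0
  then show ?case by (simp add: boxf_def atLeast0LessThan)
next
  case (Suc k)
  then have kn: "k < n" by simp
  define V where "V = c * (\<Prod>i<k. (b i - a i) powr inv_exp (p i))"
  define R where "R = (\<Prod>i\<in>{Suc k..<n}. indicator {a i<..<b i} (x i) :: real)"
  have V0: "V \<ge> 0" unfolding V_def using c by (intro mult_nonneg_nonneg prod_nonneg) auto
  have R0: "R \<ge> 0" unfolding R_def by (auto intro!: prod_nonneg)
  have ins: "{k..<n} = insert k {Suc k..<n}" using kn by auto
  have inner: "mixed_aux p (boxf n c a b) k (x(k:=t)) = ennreal (V * R) * indicator {a k<..<b k} t" for t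
  proof -
    have "(\<Prod>i\<in>{k..<n}. indicator {a i<..<b i} ((x(k:=t)) i) :: real)
        = indicator {a k<..<b k} t * R"
      unfolding ins R_def by (subst prod.insert) (auto intro!: prod.cong)
    note pe = this
    have "mixed_aux p (boxf n c a b) k (x(k:=t)) = ennreal (V * (\<Prod>i\<in>{k..<n}. indicator {a i<..<b i} ((x(k:=t)) i)))"
      unfolding V_def by (rule Suc.IH[OF less_imp_le[OF kn]])
    also have "\<dots> = ennreal (V * (indicator {a k<..<b k} t * R))" by (simp only: pe)
    also have "\<dots> = ennreal (V * R) * indicator {a k<..<b k} t"
      by (simp add: indicator_def)
    finally show ?thesis .
  qed
  have abk: "a k < b k" using ab kn by simp
  have pk: "0 < p k" using pp kn by simp
  have goalR: "(\<Prod>i<Suc k. (b i - a i) powr inv_exp (p i)) = (\<Prod>i<k. (b i - a i) powr inv_exp (p i)) * (b k - a k) powr inv_exp (p k)"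
    by simp
  show ?case
  proof (cases "p k = \<infinity>")
    case True
    have "mixed_aux p (boxf n c a b) (Suc k) x = ennreal (V * R)"
      using True by (simp add: inner esssup_ind[OF abk])
    moreover have "(b k - a k) powr inv_exp (p k) = 1" using True abk by (simp add: inv_exp_def)
    ultimately show ?thesis unfolding goalR V_def R_def by (simp add: mult_ac)
  next
    case False
    define P where "P = enn2real (p k)"
    have P0: "P > 0" unfolding P_def using False pk by (cases "p k") auto
    have "epow (mixed_aux p (boxf n c a b) k (x(k:=t))) P = ennreal ((V*R) powr P) * indicator {a k<..<b k} t" for t
      unfolding inner using V0 R0 P0
      by (auto simp: indicator_def epow_ennreal)
    then have "(\<integral>\<^sup>+ t. epow (mixed_aux p (boxf n c a b) k (x(k:=t))) P \<partial>lborel)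
        = ennreal ((V*R) powr P) * ennreal (b k - a k)"
      using abk by (simp add: nn_integral_cmult_indicator)
    also have "\<dots> = ennreal ((V*R) powr P * (b k - a k))"
      using abk by (simp add: ennreal_mult')
    finally have I: "(\<integral>\<^sup>+ t. epow (mixed_aux p (boxf n c a b) k (x(k:=t))) P \<partial>lborel)
        = ennreal ((V*R) powr P * (b k - a k))" .
    have "mixed_aux p (boxf n c a b) (Suc k) x = ennreal (((V*R) powr P * (b k - a k)) powr (1/P))"
      using False I abk by (simp add: P_def[symmetric] epow_ennreal)
    also have "((V*R) powr P * (b k - a k)) powr (1/P) = V * R * (b k - a k) powr (1/P)"
      using V0 R0 P0 abk by (simp add: powr_mult powr_self_inv)
    finally show ?thesis
      unfolding goalR V_def R_def using False by (simp add: inv_exp_def P_def mult_ac)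
  qed
qed

lemma young_pt:
  fixes u l P :: real
  assumes "P > 1" "l > 0" "u \<ge> 0"
  shows "u \<le> l powr P / P * u powr P + l powr (- (P/(P-1))) / (P/(P-1))"
proof -
  have Q: "P/(P-1) > 1" using assms by (simp add: field_simps)
  have s: "1/P + 1/(P/(P-1)) = 1" using assms by (simp add: field_simps)
  have "(l*u) * (1/l) \<le> (l*u) powr P / P + (1/l) powr (P/(P-1)) / (P/(P-1))"
    by (rule Youngs_inequality[OF assms(1) Q s]) (use assms in auto)
  moreover have "(l*u) * (1/l) = u" using assms by simp
  moreover have "(l*u) powr P = l powr P * u powr P" using assms by (simp add: powr_mult)
  moreover have "(1/l) powr (P/(P-1)) = l powr (- (P/(P-1)))" using assms
    by (simp add: powr_minus_divide powr_divide)
  ultimately show ?thesis by simp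
qed

lemma epow_zero_iff: "P > 0 \<Longrightarrow> epow x P = 0 \<longleftrightarrow> x = 0"
  unfolding epow_def by (cases x) auto

lemma holder1:
  fixes M :: "real \<Rightarrow> ennreal" and P a b :: real
  assumes M: "M \<in> borel_measurable lborel" and P: "P > 1" and ab: "a < b"
    and supp: "\<And>t. t \<notin> {a<..<b} \<Longrightarrow> M t = 0"
  shows "(\<integral>\<^sup>+t. M t \<partial>lborel) \<le> ennreal ((b-a) powr (1 - 1/P)) * epow (\<integral>\<^sup>+t. epow (M t) P \<partial>lborel) (1/P)"
proof -
  define A where "A = (\<integral>\<^sup>+t. epow (M t) P \<partial>lborel)"
  define l where "l = b - a"
  have l0: "l > 0" using ab by (simp add: l_def)
  have Q1: "P/(P-1) > 0" using P by simp
  have bound: "(\<integral>\<^sup>+t. M t \<partial>lborel) \<le> ennreal (lam powr P / P) * A + ennreal (lam powr (- (P/(P-1))) / (P/(P-1))) * ennreal l"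
    if lam: "lam > 0" for lam
  proof -
    have pt: "M t \<le> ennreal (lam powr P / P) * epow (M t) P + ennreal (lam powr (- (P/(P-1))) / (P/(P-1))) * indicator {a<..<b} t" for t
    proof (cases "t \<in> {a<..<b}")
      case False then show ?thesis using supp by simp
    next
      case True
      show ?thesis
      proof (cases "M t")
        case (real u)
        have "u \<le> lam powr P / P * u powr P + lam powr (- (P/(P-1))) / (P/(P-1))"
          using young_pt[OF P lam real(1)] .
        then show ?thesis using True real P lam Q1
          by (simp add: epow_ennreal ennreal_mult'[symmetric] ennreal_plus[symmetric] del: ennreal_plus ennreal_mult' )
      next
        case top
        have "ennreal (lam powr P / P) > 0" using lam P by simp
        then show ?thesis using top lam P by (simp add: epow_def ennreal_mult_top)
      qed
    qed
    have "(\<integral>\<^sup>+t. M t \<partial>lborel) \<le> (\<integral>\<^sup>+t. ennreal (lam powr P / P) * epow (M t) P + ennreal (lam powr (- (P/(P-1))) / (P/(P-1))) * indicator {a<..<b} t \<partial>lborel)"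
      by (rule nn_integral_mono) (rule pt)
    also have "\<dots> = ennreal (lam powr P / P) * A + ennreal (lam powr (- (P/(P-1))) / (P/(P-1))) * ennreal l"
      using M ab unfolding A_def l_def
      by (subst nn_integral_add) (auto simp: nn_integral_cmult nn_integral_cmult_indicator)
    finally show ?thesis .
  qed
  show ?thesis
  proof (cases A)
    case top
    have "ennreal ((b-a) powr (1 - 1/P)) > 0" using ab by simp
    then show ?thesis using top P unfolding A_def by (simp add: epow_def ennreal_mult_top)
  next
    case (real av)
    show ?thesis
    proof (cases "av = 0")
      case True
      have "AE t in lborel. epow (M t) P = 0"
        using real True M unfolding A_def by (subst nn_integral_0_iff_AE[symmetric]) auto
      then have "AE t in lborel. M t = 0" using P by (auto simp: epow_zero_iff)
      then have "(\<integral>\<^sup>+t. M t \<partial>lborel) = 0" using M by (subst nn_integral_0_iff_AE) auto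
      then show ?thesis by simp
    next
      case False
      then have a0: "av > 0" using real by simp
      define lam where "lam = (l/av) powr ((P-1)/(P*P))"
      have lam0: "lam > 0" unfolding lam_def using l0 a0 by simp
      have e1: "lam powr P = l powr ((P-1)/P) / av powr ((P-1)/P)"
        unfolding lam_def using P l0 a0 by (simp add: powr_powr powr_divide)
      have e2: "lam powr (- (P/(P-1))) = l powr (-1/P) / av powr (-1/P)"
        unfolding lam_def using P l0 a0 by (simp add: powr_powr powr_divide)
      have f1: "lam powr P / P * av = l powr (1 - 1/P) * av powr (1/P) / P"
      proof -
        have E: "1 - 1/P = (P-1)/P" using P by (simp add: field_simps)
        have "av powr (1/P) * av powr ((P-1)/P) = av powr 1"
          using a0 P by (simp add: powr_add[symmetric] field_simps)
        then have h: "av / av powr ((P-1)/P) = av powr (1/P)"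
          using a0 P by (simp add: field_simps)
        have "lam powr P / P * av = l powr ((P-1)/P) * (av / av powr ((P-1)/P)) / P"
          unfolding e1 by simp
        then show ?thesis unfolding h E .
      qed
      have f2: "lam powr (- (P/(P-1))) / (P/(P-1)) * l = l powr (1 - 1/P) * av powr (1/P) * ((P-1)/P)"
      proof -
        have "l powr (1 - 1/P) = l powr (-1/P + 1)" by (simp add: algebra_simps)
        also have "\<dots> = l powr (-1/P) * l" using l0 by (subst powr_add) simp
        finally have h1: "l powr (-1/P) * l = l powr (1 - 1/P)" by simp
        have h2: "1 / av powr (-1/P) = av powr (1/P)"
          using a0 by (simp add: powr_minus_divide)
        have "lam powr (- (P/(P-1))) / (P/(P-1)) * l = (l powr (-1/P) * l) * (1 / av powr (-1/P)) * ((P-1)/P)"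
          unfolding e2 using P by (simp add: field_simps)
        then show ?thesis by (simp only: h1 h2)
      qed
      have sum: "lam powr P / P * av + lam powr (- (P/(P-1))) / (P/(P-1)) * l = l powr (1 - 1/P) * av powr (1/P)"
        unfolding f1 f2 using P by (simp add: field_simps)
      have "(\<integral>\<^sup>+t. M t \<partial>lborel) \<le> ennreal (lam powr P / P) * ennreal av + ennreal (lam powr (- (P/(P-1))) / (P/(P-1))) * ennreal l"
        using bound[OF lam0] real by simp
      also have "\<dots> = ennreal (lam powr P / P * av + lam powr (- (P/(P-1))) / (P/(P-1)) * l)"
        using P a0 l0 lam0 by (simp add: ennreal_mult'[symmetric] ennreal_plus[symmetric] del: ennreal_plus ennreal_mult')
      also have "\<dots> = ennreal (l powr (1 - 1/P)) * epow A (1/P)"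
        unfolding sum using real a0 by (simp add: epow_ennreal ennreal_mult')
      finally show ?thesis unfolding l_def A_def .
    qed
  qed
qed

lemma esssup_zero: "esssup lborel (\<lambda>t. 0::ennreal) = 0"
  by (rule esssup_const) simp

lemma mixed_supp:
  assumes supp: "\<And>x. (\<exists>i<n. x i \<notin> {a i<..<b i}) \<Longrightarrow> H x = 0"
  shows "k \<le> n \<Longrightarrow> k \<le> j \<Longrightarrow> j < n \<Longrightarrow> x j \<notin> {a j<..<b j} \<Longrightarrow> mixed_aux q H k x = 0"
proof (induction k arbitrary: x)
  case 0
  then show ?case using supp by auto
next
  case (Suc k)
  have "mixed_aux q H k (x(k:=t)) = 0" for t
    using Suc by auto
  then show ?case by (simp add: esssup_zero)
qed

definition mrg :: "nat \<Rightarrow> (nat \<Rightarrow> real) \<Rightarrow> (nat \<Rightarrow> real) \<Rightarrow> (nat \<Rightarrow> real)" where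
  "mrg k z x = (\<lambda>i. if i < k then z i else x i)"

lemma mrg_meas:
  assumes x: "x \<in> space (Rn n)" and k: "k \<le> n"
  shows "(\<lambda>z. mrg k z x) \<in> measurable (PiM {..<k} (\<lambda>_. lborel)) (Rn n)"
  unfolding Rn_def mrg_def
  apply (rule measurable_PiM_single')
  subgoal for i by (cases "i < k") auto
  using x k by (auto simp: space_Rn space_PiM PiE_def extensional_def)

lemma holder_fubini:
  assumes H: "H \<in> borel_measurable (Rn n)"
    and ab: "\<forall>i<n. a i < b i"
    and supp: "\<And>x. (\<exists>i<n. x i \<notin> {a i<..<b i}) \<Longrightarrow> H x = 0"
    and qq: "\<forall>i<n. 1 < q i \<and> q i < \<infinity>"
  shows "k \<le> n \<Longrightarrow> x \<in> space (Rn n) \<Longrightarrow>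
    (\<integral>\<^sup>+ z. H (mrg k z x) \<partial>(PiM {..<k} (\<lambda>_. lborel)))
      \<le> ennreal (\<Prod>i<k. (b i - a i) powr (1 - 1 / enn2real (q i))) * mixed_aux q H k x"
proof (induction k arbitrary: x)
  case 0
  interpret product_sigma_finite "\<lambda>_. lborel" by (rule psf)
  show ?case by (simp add: nn_integral_empty mrg_def space_PiM PiE_empty_domain)
next
  case (Suc k)
  interpret product_sigma_finite "\<lambda>_. lborel" by (rule psf)
  have kn: "k < n" using Suc by simp
  have x: "x \<in> space (Rn n)" using Suc by simp
  define c where "c = (\<Prod>i<k. (b i - a i) powr (1 - 1 / enn2real (q i)))"
  define Q where "Q = enn2real (q k)"
  have Q1: "Q > 1" using qq kn unfolding Q_def by (cases "q k") auto
  have qk: "q k \<noteq> \<infinity>" using qq kn by auto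
  have abk: "a k < b k" using ab kn by simp
  have c0: "c \<ge> 0" unfolding c_def by (auto intro!: prod_nonneg)
  have fm: "(\<lambda>w. H (mrg (Suc k) w x)) \<in> borel_measurable (PiM (insert k {..<k}) (\<lambda>_. lborel))"
  proof -
    have "{..<Suc k} = insert k {..<k}" by auto
    then show ?thesis
      using measurable_comp[OF mrg_meas[OF x Suc(2)] H] by (simp add: o_def)
  qed
  have eqm: "mrg (Suc k) (z(k:=t)) x = mrg k z (x(k:=t))" for z t
    by (auto simp: mrg_def)
  define M where "M t = mixed_aux q H k (x(k:=t))" for t
  have Mm: "M \<in> borel_measurable lborel"
    unfolding M_def by (rule upd_t_meas[OF mixed_meas1[OF H] x kn]) (use kn in simp)
  have Ms: "M t = 0" if "t \<notin> {a k<..<b k}" for t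
    unfolding M_def by (rule mixed_supp[OF supp, where k=k and j=k]) (use kn that in auto)
  have "(\<integral>\<^sup>+ z. H (mrg (Suc k) z x) \<partial>(PiM {..<Suc k} (\<lambda>_. lborel)))
      = (\<integral>\<^sup>+ t. (\<integral>\<^sup>+ z. H (mrg (Suc k) (z(k:=t)) x) \<partial>(PiM {..<k} (\<lambda>_. lborel))) \<partial>lborel)"
  proof -
    have "{..<Suc k} = insert k {..<k}" by auto
    then show ?thesis using product_nn_integral_insert_rev[OF _ _ fm] by simp
  qed
  also have "\<dots> \<le> (\<integral>\<^sup>+ t. ennreal c * M t \<partial>lborel)"
    unfolding eqm M_def c_def
  proof (rule nn_integral_mono)
    fix t
    show "(\<integral>\<^sup>+ z. H (mrg k z (x(k:=t))) \<partial>(PiM {..<k} (\<lambda>_. lborel)))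
      \<le> ennreal (\<Prod>i<k. (b i - a i) powr (1 - 1 / enn2real (q i))) * mixed_aux q H k (x(k:=t))"
      by (rule Suc(1)[OF less_imp_le[OF kn] upd_space[OF x kn]])
  qed
  also have "\<dots> = ennreal c * (\<integral>\<^sup>+ t. M t \<partial>lborel)"
    using Mm by (simp add: nn_integral_cmult)
  also have "\<dots> \<le> ennreal c * (ennreal ((b k - a k) powr (1 - 1/Q)) * epow (\<integral>\<^sup>+t. epow (M t) Q \<partial>lborel) (1/Q))"
    by (intro mult_left_mono holder1[OF Mm Q1 abk] Ms) auto
  also have "\<dots> = ennreal (\<Prod>i<Suc k. (b i - a i) powr (1 - 1 / enn2real (q i))) * mixed_aux q H (Suc k) x"
    using qk c0 by (simp add: M_def Q_def c_def mult.assoc ennreal_mult')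
  finally show ?case .
qed

lemma holder_total:
  assumes H: "H \<in> borel_measurable (Rn n)"
    and ab: "\<forall>i<n. a i < b i"
    and supp: "\<And>x. (\<exists>i<n. x i \<notin> {a i<..<b i}) \<Longrightarrow> H x = 0"
    and qq: "\<forall>i<n. 1 < q i \<and> q i < \<infinity>"
  shows "(\<integral>\<^sup>+ z. H z \<partial>Rn n) \<le> ennreal (\<Prod>i<n. (b i - a i) powr (1 - 1 / enn2real (q i))) * mixed_norm n q H"
proof -
  have u: "(\<lambda>_. undefined) \<in> space (Rn n)" by (simp add: space_Rn PiE_def extensional_def)
  have "(\<integral>\<^sup>+ z. H z \<partial>Rn n) = (\<integral>\<^sup>+ z. H (mrg n z (\<lambda>_. undefined)) \<partial>Rn n)"
    by (intro nn_integral_cong) (auto simp: mrg_def space_Rn PiE_def extensional_def intro!: arg_cong[where f=H])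
  also have "\<dots> \<le> ennreal (\<Prod>i<n. (b i - a i) powr (1 - 1 / enn2real (q i))) * mixed_norm n q H"
    unfolding mixed_norm_def Rn_def by (rule holder_fubini[OF H ab supp qq order.refl u])
  finally show ?thesis .
qed

lemma edist_L2: "edist n x y = L2_set (\<lambda>i. x i - y i) {..<n}"
  by (simp add: edist_def L2_set_def)

lemma edist_nonneg: "0 \<le> edist n x y"
  by (simp add: edist_def sum_nonneg)

lemma edist_sym: "edist n x y = edist n y x"
proof -
  have "(\<Sum>i<n. (x i - y i)\<^sup>2) = (\<Sum>i<n. (y i - x i)\<^sup>2)"
    by (intro sum.cong refl) (simp add: power2_commute)
  then show ?thesis unfolding edist_def by simp
qed

lemma edist_tri: "edist n x z \<le> edist n x y + edist n y z"
proof -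
  have "edist n x z = L2_set (\<lambda>i. (x i - y i) + (y i - z i)) {..<n}"
    by (simp add: edist_L2)
  also have "\<dots> \<le> edist n x y + edist n y z"
    unfolding edist_L2 by (rule L2_set_triangle_ineq)
  finally show ?thesis .
qed

lemma edist_coord: "i < n \<Longrightarrow> \<bar>x i - y i\<bar> \<le> edist n x y"
proof -
  assume i: "i < n"
  have "\<bar>x i - y i\<bar> \<le> L2_set (\<lambda>i. \<bar>x i - y i\<bar>) {..<n}"
    by (rule member_le_L2_set) (use i in auto)
  also have "\<dots> = edist n x y" by (simp add: edist_L2 L2_set_def)
  finally show ?thesis .
qed

lemma edist_small:
  assumes n: "n \<ge> 1" and rho: "\<rho> > 0" and c: "\<forall>i<n. \<bar>x i - y i\<bar> < \<rho> / n"
  shows "edist n x y < \<rho>"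
proof -
  have "(\<Sum>i<n. (x i - y i)\<^sup>2) < (\<Sum>i<n. (\<rho>/n)\<^sup>2)"
  proof (rule sum_strict_mono)
    fix i assume "i \<in> {..<n}"
    then have "\<bar>x i - y i\<bar> < \<rho>/n" using c by auto
    then show "(x i - y i)\<^sup>2 < (\<rho>/n)\<^sup>2"
      by (metis abs_ge_zero abs_power2 power2_abs power_strict_mono zero_less_numeral)
  next
    have "0 \<in> {..<n}" using n by simp
    then show "{..<n} \<noteq> {}" by blast
  qed simp
  also have "\<dots> = \<rho>\<^sup>2 / n" using n by (simp add: power2_eq_square)
  also have "\<dots> \<le> \<rho>\<^sup>2" using n rho by (simp add: divide_le_eq mult_le_cancel_left1)
  finally have "(\<Sum>i<n. (x i - y i)\<^sup>2) < \<rho>\<^sup>2" .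
  then have "sqrt (\<Sum>i<n. (x i - y i)\<^sup>2) < sqrt (\<rho>\<^sup>2)" by (rule real_sqrt_less_mono)
  then show ?thesis using rho by (simp add: edist_def)
qed

lemma eball_sets[measurable]: "eball n y r \<in> sets (Rn n)"
proof -
  have eq: "edist n x y = edist n x (restrict y {..<n})" for x
    unfolding edist_def by simp
  have "(\<lambda>x. edist n x (restrict y {..<n})) \<in> borel_measurable (Rn n)"
    by (rule edist_meas) (auto simp: space_Rn)
  then have "(\<lambda>x. edist n x y) \<in> borel_measurable (Rn n)" unfolding eq[symmetric] .
  then have "{x \<in> space (Rn n). edist n x y < r} \<in> sets (Rn n)" by measurable
  then show ?thesis by (simp add: eball_def)
qed

lemma box_emeasure:
  assumes "\<forall>i<n. c i < d i"
  shows "emeasure (Rn n) (PiE {..<n} (\<lambda>i. {c i<..<d i})) = ennreal (\<Prod>i<n. d i - c i)"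
proof -
  interpret finite_product_sigma_finite "\<lambda>_. lborel" "{..<n}"
    by (simp add: finite_product_sigma_finite_def psf finite_product_sigma_finite_axioms_def)
  have "emeasure (Rn n) (PiE {..<n} (\<lambda>i. {c i<..<d i})) = (\<Prod>i<n. emeasure lborel {c i<..<d i})"
    unfolding Rn_def by (rule measure_times) auto
  also have "\<dots> = (\<Prod>i<n. ennreal (d i - c i))"
    using assms by (intro prod.cong) auto
  also have "\<dots> = ennreal (\<Prod>i<n. d i - c i)"
    using assms by (subst prod_ennreal) auto
  finally show ?thesis .
qed

lemma box_sets: "PiE {..<n} (\<lambda>i. {c i<..<d i}) \<in> sets (Rn n)"
  unfolding Rn_def by (rule sets_PiM_I_finite) auto

lemma eball_sub_box: "eball n y \<rho> \<subseteq> PiE {..<n} (\<lambda>i. {y i - \<rho><..<y i + \<rho>})"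
proof
  fix x assume x: "x \<in> eball n y \<rho>"
  then have xs: "x \<in> space (Rn n)" and d: "edist n x y < \<rho>" by (auto simp: eball_def)
  have "\<bar>x i - y i\<bar> < \<rho>" if "i < n" for i using edist_coord[OF that, of x y] d by simp
  then have "\<forall>i\<in>{..<n}. x i \<in> {y i - \<rho><..<y i + \<rho>}" by (force simp: abs_less_iff)
  then show "x \<in> PiE {..<n} (\<lambda>i. {y i - \<rho><..<y i + \<rho>})"
    using xs by (auto simp: space_Rn PiE_iff)
qed

lemma box_sub_eball:
  assumes n: "n \<ge> 1" and rho: "\<rho> > 0"
  shows "PiE {..<n} (\<lambda>i. {y i - \<rho>/n<..<y i + \<rho>/n}) \<subseteq> eball n y \<rho>"
proof
  fix x assume x: "x \<in> PiE {..<n} (\<lambda>i. {y i - \<rho>/n<..<y i + \<rho>/n})"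
  then have "\<forall>i<n. \<bar>x i - y i\<bar> < \<rho>/n" by (auto simp: PiE_def Pi_def abs_less_iff)
  from edist_small[OF n rho this] x show "x \<in> eball n y \<rho>"
    by (auto simp: eball_def space_Rn PiE_def)
qed

lemma vol_bounds:
  assumes n: "n \<ge> 1" and rho: "\<rho> > 0"
  shows "(2*\<rho>/n)^n \<le> vol n (eball n y \<rho>)" "vol n (eball n y \<rho>) \<le> (2*\<rho>)^n"
    "emeasure (Rn n) (eball n y \<rho>) < \<infinity>"
proof -
  have e1: "emeasure (Rn n) (PiE {..<n} (\<lambda>i. {y i - \<rho>/n<..<y i + \<rho>/n})) = ennreal ((2*\<rho>/n)^n)"
    using box_emeasure[of n "\<lambda>i. y i - \<rho>/n" "\<lambda>i. y i + \<rho>/n"] rho n by simp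
  have e2: "emeasure (Rn n) (PiE {..<n} (\<lambda>i. {y i - \<rho><..<y i + \<rho>})) = ennreal ((2*\<rho>)^n)"
    using box_emeasure[of n "\<lambda>i. y i - \<rho>" "\<lambda>i. y i + \<rho>"] rho by simp
  have le2: "emeasure (Rn n) (eball n y \<rho>) \<le> ennreal ((2*\<rho>)^n)"
    using emeasure_mono[OF eball_sub_box[of n y \<rho>] box_sets] e2 by simp
  then show fin: "emeasure (Rn n) (eball n y \<rho>) < \<infinity>"
    by (simp add: le_less_trans)
  have le1: "ennreal ((2*\<rho>/n)^n) \<le> emeasure (Rn n) (eball n y \<rho>)"
    using emeasure_mono[OF box_sub_eball[OF n rho, of y] eball_sets] e1 by simp
  show "(2*\<rho>/n)^n \<le> vol n (eball n y \<rho>)"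
  proof -
    have "enn2real (ennreal ((2*\<rho>/n)^n)) \<le> enn2real (emeasure (Rn n) (eball n y \<rho>))"
      using le1 fin by (intro enn2real_mono) (auto simp: top_unique)
    then show ?thesis using rho unfolding vol_def measure_def by simp
  qed
  show "vol n (eball n y \<rho>) \<le> (2*\<rho>)^n"
    using le2 rho unfolding vol_def measure_def
    by (simp add: enn2real_leI)
qed

lemma undef_space: "(\<lambda>_. undefined) \<in> space (Rn n)"
  by (simp add: space_Rn PiE_def extensional_def)

lemma loc_int_meas:
  assumes "loc_int n b"
  shows "b \<in> borel_measurable (Rn n)"
proof (rule borel_measurable_LIMSEQ_real)
  let ?y = "(\<lambda>_. undefined) :: nat \<Rightarrow> real"
  show "(\<lambda>x. indicator (eball n ?y (Suc k)) x *\<^sub>R b x) \<in> borel_measurable (Rn n)" for k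
  proof -
    have "set_integrable (Rn n) (eball n ?y (Suc k)) b"
      using assms undef_space unfolding loc_int_def by auto
    then show ?thesis unfolding set_integrable_def by (rule borel_measurable_integrable)
  qed
  fix x assume x: "x \<in> space (Rn n)"
  obtain N :: nat where N: "edist n x ?y < N" using reals_Archimedean2 by blast
  have "eventually (\<lambda>k. indicator (eball n ?y (Suc k)) x *\<^sub>R b x = b x) sequentially"
  proof (rule eventually_sequentiallyI[of N])
    fix k assume "N \<le> k"
    then have "edist n x ?y < Suc k" using N by linarith
    then show "indicator (eball n ?y (Suc k)) x *\<^sub>R b x = b x" using x by (simp add: eball_def)
  qed
  then show "(\<lambda>k. indicator (eball n ?y (Suc k)) x *\<^sub>R b x) \<longlonglongrightarrow> b x"
    by (rule tendsto_eventually)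
qed

lemma boxf_meas[measurable]: "boxf n c a b \<in> borel_measurable (Rn n)"
proof -
  have "(\<lambda>x. \<Prod>i<n. indicator {a i<..<b i} (x i) :: real) \<in> borel_measurable (Rn n)"
  proof (rule borel_measurable_prod)
    fix i assume "i \<in> {..<n}"
    then have [measurable]: "(\<lambda>x. x i) \<in> borel_measurable (Rn n)" by simp
    show "(\<lambda>x. indicator {a i<..<b i} (x i) :: real) \<in> borel_measurable (Rn n)" by measurable
  qed
  then show ?thesis unfolding boxf_def by measurable
qed

lemma comm_meas:
  assumes b: "b \<in> borel_measurable (Rn n)" and f: "f \<in> borel_measurable (Rn n)"
  shows "commutator n C \<gamma> b f \<in> borel_measurable (Rn n)"
proof -
  interpret sigma_finite_measure "Rn n" by (rule sf_Rn)
  have [measurable]: "fst \<in> measurable (Rn n \<Otimes>\<^sub>M Rn n) (Rn n)" "snd \<in> measurable (Rn n \<Otimes>\<^sub>M Rn n) (Rn n)"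
    by auto
  have e: "(\<lambda>w. edist n (fst w) (snd w)) \<in> borel_measurable (Rn n \<Otimes>\<^sub>M Rn n)"
    by (rule edist_meas) auto
  have "(\<lambda>w. (b (fst w) - b (snd w)) * f (snd w) / edist n (fst w) (snd w) powr (real n - \<gamma>)) \<in> borel_measurable (Rn n \<Otimes>\<^sub>M Rn n)"
    using b f e by measurable
  then have "case_prod (\<lambda>x y. (b x - b y) * f y / edist n x y powr (real n - \<gamma>)) \<in> borel_measurable (Rn n \<Otimes>\<^sub>M Rn n)"
    by (simp add: case_prod_beta')
  from borel_measurable_lebesgue_integral[OF this]
  show ?thesis unfolding commutator_def by measurable
qed

definition Phi :: "nat \<Rightarrow> (nat \<Rightarrow> ennreal) \<Rightarrow> (nat \<Rightarrow> ennreal) \<Rightarrow> real \<Rightarrow> ((nat \<Rightarrow> real) \<Rightarrow> real) \<Rightarrow> real \<Rightarrow> (nat \<Rightarrow> real) \<Rightarrow> ennreal" where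
  "Phi n p s \<alpha> f \<rho> y = ennreal (vol n (eball n y \<rho>) powr (1/\<alpha> - avg_inv n p - avg_inv n s))
        * mixed_norm n p (\<lambda>x. ennreal (indicator (eball n y \<rho>) x * \<bar>f x\<bar>))"

lemma amalgam_Phi: "amalgam_norm n p s \<alpha> f = (SUP r\<in>{0<..}. mixed_norm n s (Phi n p s \<alpha> f r))"
  unfolding amalgam_norm_def Phi_def ..

lemma mixed_zero: "mixed_aux p (\<lambda>_. 0) k x = 0"
  by (induction k arbitrary: x) (auto simp: esssup_zero)

lemma mixed_box_full:
  assumes c: "c \<ge> 0" and ab: "\<forall>i<n. a i < b i" and pp: "\<forall>i<n. 0 < p i"
  shows "mixed_norm n p (boxf n c a b) = ennreal (c * (\<Prod>i<n. (b i - a i) powr inv_exp (p i)))"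
  unfolding mixed_norm_def using mixed_box[OF c ab pp order.refl] by simp

lemma ball_le_boxf: "ennreal (indicator (eball n y \<rho>) x) \<le> boxf n 1 (\<lambda>i. y i - \<rho>) (\<lambda>i. y i + \<rho>) x"
proof (cases "x \<in> eball n y \<rho>")
  case True
  then have "x \<in> PiE {..<n} (\<lambda>i. {y i - \<rho><..<y i + \<rho>})" using eball_sub_box by blast
  then have "(\<Prod>i<n. indicator {y i - \<rho><..<y i + \<rho>} (x i) :: real) = 1"
    by (intro prod.neutral) (auto simp: PiE_def Pi_def)
  then show ?thesis using True by (simp add: boxf_def)
qed (simp add: boxf_def)

lemma vol_meas:
  "(\<lambda>y. vol n (eball n y \<rho>)) \<in> borel_measurable (Rn n)"
proof -
  interpret sigma_finite_measure "Rn n" by (rule sf_Rn)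
  have [measurable]: "fst \<in> measurable (Rn n \<Otimes>\<^sub>M Rn n) (Rn n)" "snd \<in> measurable (Rn n \<Otimes>\<^sub>M Rn n) (Rn n)"
    by auto
  have e: "(\<lambda>w. edist n (snd w) (fst w)) \<in> borel_measurable (Rn n \<Otimes>\<^sub>M Rn n)"
    by (rule edist_meas) auto
  define Q where "Q = {w \<in> space (Rn n \<Otimes>\<^sub>M Rn n). edist n (snd w) (fst w) < \<rho>}"
  have Q: "Q \<in> sets (Rn n \<Otimes>\<^sub>M Rn n)" unfolding Q_def using e by measurable
  have m: "(\<lambda>y. emeasure (Rn n) (Pair y -` Q)) \<in> borel_measurable (Rn n)"
    by (rule measurable_emeasure_Pair[OF Q])
  have "(\<lambda>y. enn2real (emeasure (Rn n) (Pair y -` Q))) \<in> borel_measurable (Rn n)"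
    using m by measurable
  moreover have "y \<in> space (Rn n) \<Longrightarrow> enn2real (emeasure (Rn n) (Pair y -` Q)) = vol n (eball n y \<rho>)" for y
    unfolding vol_def measure_def Q_def eball_def by (auto simp: space_pair_measure intro!: arg_cong[where f="\<lambda>A. enn2real (emeasure (Rn n) A)"])
  ultimately show ?thesis by (rule measurable_cong[THEN iffD1, rotated])
qed

lemma Phi_meas:
  assumes f: "f \<in> borel_measurable (Rn n)"
  shows "Phi n p s \<alpha> f \<rho> \<in> borel_measurable (Rn n)"
proof -
  have [measurable]: "fst \<in> measurable (Rn n \<Otimes>\<^sub>M Rn n) (Rn n)" "snd \<in> measurable (Rn n \<Otimes>\<^sub>M Rn n) (Rn n)"
    by auto
  have e: "(\<lambda>w. edist n (snd w) (fst w)) \<in> borel_measurable (Rn n \<Otimes>\<^sub>M Rn n)"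
    by (rule edist_meas) auto
  have fs: "(\<lambda>w. f (snd w)) \<in> borel_measurable (Rn n \<Otimes>\<^sub>M Rn n)" using f by measurable
  have H0: "(\<lambda>w. ennreal (indicator {w \<in> space (Rn n \<Otimes>\<^sub>M Rn n). edist n (snd w) (fst w) < \<rho>} w * \<bar>f (snd w)\<bar>)) \<in> borel_measurable (Rn n \<Otimes>\<^sub>M Rn n)"
    using e fs by measurable
  have H: "(\<lambda>(y,x). ennreal (indicator (eball n y \<rho>) x * \<bar>f x\<bar>)) \<in> borel_measurable (Rn n \<Otimes>\<^sub>M Rn n)"
  proof (rule measurable_cong[THEN iffD1, OF _ H0])
    fix w assume "w \<in> space (Rn n \<Otimes>\<^sub>M Rn n)"
    then show "ennreal (indicator {w \<in> space (Rn n \<Otimes>\<^sub>M Rn n). edist n (snd w) (fst w) < \<rho>} w * \<bar>f (snd w)\<bar>) =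
      (\<lambda>(y,x). ennreal (indicator (eball n y \<rho>) x * \<bar>f x\<bar>)) w"
      by (auto simp: eball_def space_pair_measure indicator_def split: prod.splits)
  qed
  have M2: "(\<lambda>(y,x). mixed_aux p (\<lambda>x. ennreal (indicator (eball n y \<rho>) x * \<bar>f x\<bar>)) n x) \<in> borel_measurable (Rn n \<Otimes>\<^sub>M Rn n)"
    using mixed_meas[OF H order.refl] by simp
  have "(\<lambda>y. (y, (\<lambda>_. undefined) :: nat \<Rightarrow> real)) \<in> measurable (Rn n) (Rn n \<Otimes>\<^sub>M Rn n)"
    using undef_space by measurable
  from measurable_comp[OF this M2]
  have M3: "(\<lambda>y. mixed_norm n p (\<lambda>x. ennreal (indicator (eball n y \<rho>) x * \<bar>f x\<bar>))) \<in> borel_measurable (Rn n)"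
    by (simp add: o_def mixed_norm_def)
  have V: "(\<lambda>y. vol n (eball n y \<rho>)) \<in> borel_measurable (Rn n)" by (rule vol_meas)
  show ?thesis unfolding Phi_def using M3 V by measurable
qed

lemma powr_between_lo:
  fixes V lo hi e :: real
  assumes "0 < lo" "lo \<le> V" "V \<le> hi"
  shows "min (lo powr e) (hi powr e) \<le> V powr e"
proof (cases "e \<ge> 0")
  case True
  then have "lo powr e \<le> V powr e" using assms by (intro powr_mono2) auto
  then show ?thesis by simp
next
  case False
  then have "hi powr e \<le> V powr e" using assms by (intro powr_mono2') auto
  then show ?thesis by simp
qed

lemma powr_between_hi:
  fixes V lo hi e :: real
  assumes "0 < lo" "lo \<le> V" "V \<le> hi"
  shows "V powr e \<le> max (lo powr e) (hi powr e)"
proof (cases "e \<ge> 0")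
  case True
  then have "V powr e \<le> hi powr e" using assms by (intro powr_mono2) auto
  then show ?thesis by simp
next
  case False
  then have "V powr e \<le> lo powr e" using assms by (intro powr_mono2') auto
  then show ?thesis by simp
qed

lemma amalgam_lower:
  assumes n: "n \<ge> 1" and r: "r > 0" and g: "g \<in> borel_measurable (Rn n)" and ss: "\<forall>i<n. 0 < s i"
    and c0: "c' \<ge> 0"
    and cle: "ennreal c' \<le> mixed_norm n q (\<lambda>x. ennreal (indicator (eball n y0 r) x * \<bar>g x\<bar>))"
  shows "ennreal (c' * min (((4*r/n)^n) powr (1/\<beta> - avg_inv n q - avg_inv n s)) (((4*r)^n) powr (1/\<beta> - avg_inv n q - avg_inv n s))
      * (\<Prod>i<n. (2*r/n) powr inv_exp (s i))) \<le> amalgam_norm n q s \<beta> g"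
proof -
  define e where "e = 1/\<beta> - avg_inv n q - avg_inv n s"
  define vlo where "vlo = min (((4*r/n)^n) powr e) (((4*r)^n) powr e)"
  define a' where "a' = (\<lambda>i. y0 i - r/n)"
  define b' where "b' = (\<lambda>i. y0 i + r/n)"
  have vlo0: "vlo \<ge> 0" unfolding vlo_def by simp
  have ab: "\<forall>i<n. a' i < b' i" unfolding a'_def b'_def using r n by auto
  have Gm: "(\<lambda>x. ennreal (indicator (eball n y0 r) x * \<bar>g x\<bar>)) \<in> borel_measurable (Rn n)"
    using g by measurable
  have pt: "boxf n (c' * vlo) a' b' y \<le> Phi n q s \<beta> g (2*r) y" for y
  proof (cases "\<forall>i<n. y i \<in> {a' i<..<b' i}")
    case False
    then obtain i where i: "i < n" "y i \<notin> {a' i<..<b' i}" by auto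
    have pz: "(\<Prod>i<n. indicator {a' i<..<b' i} (y i) :: real) = 0"
    proof (rule prod_zero)
      show "\<exists>j\<in>{..<n}. indicator {a' j<..<b' j} (y j) = (0::real)"
        using i by (intro bexI[of _ i]) (auto simp: indicator_def)
    qed simp
    show ?thesis unfolding boxf_def pz by simp
  next
    case True
    then have "(\<Prod>i<n. indicator {a' i<..<b' i} (y i) :: real) = 1"
      by (intro prod.neutral) auto
    then have bx: "boxf n (c' * vlo) a' b' y = ennreal c' * ennreal vlo"
      using c0 vlo0 by (simp add: boxf_def ennreal_mult)
    have "\<forall>i<n. \<bar>y0 i - y i\<bar> < r/n" using True unfolding a'_def b'_def by (auto simp: abs_less_iff)
    from edist_small[OF n r this] have dy: "edist n y0 y < r" .
    have sub: "indicator (eball n y0 r) x \<le> (indicator (eball n y (2*r)) x :: real)" for x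
    proof (cases "x \<in> eball n y0 r")
      case True
      then have "x \<in> space (Rn n)" "edist n x y0 < r" by (auto simp: eball_def)
      moreover have "edist n x y \<le> edist n x y0 + edist n y0 y" by (rule edist_tri)
      ultimately show ?thesis using dy by (auto simp: eball_def)
    qed simp
    have N: "ennreal c' \<le> mixed_norm n q (\<lambda>x. ennreal (indicator (eball n y (2*r)) x * \<bar>g x\<bar>))"
    proof -
      have "mixed_norm n q (\<lambda>x. ennreal (indicator (eball n y0 r) x * \<bar>g x\<bar>)) \<le> mixed_norm n q (\<lambda>x. ennreal (indicator (eball n y (2*r)) x * \<bar>g x\<bar>))"
        unfolding mixed_norm_def
        by (rule mixed_mono[OF _ Gm order.refl undef_space]) (intro ennreal_leI mult_right_mono sub, simp)
      then show ?thesis using cle by simp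
    qed
    have V: "vlo \<le> vol n (eball n y (2*r)) powr e"
      unfolding vlo_def
      using vol_bounds(1,2)[OF n, of "2*r" y] r n
      by (intro powr_between_lo) (auto simp: mult.assoc)
    have "ennreal c' * ennreal vlo \<le> mixed_norm n q (\<lambda>x. ennreal (indicator (eball n y (2*r)) x * \<bar>g x\<bar>)) * ennreal (vol n (eball n y (2*r)) powr e)"
      by (intro mult_mono N ennreal_leI V) auto
    then show ?thesis unfolding bx Phi_def e_def by (simp add: mult.commute)
  qed
  have "mixed_norm n s (boxf n (c' * vlo) a' b') \<le> mixed_norm n s (Phi n q s \<beta> g (2*r))"
    unfolding mixed_norm_def by (rule mixed_mono[OF pt boxf_meas order.refl undef_space])
  also have "\<dots> \<le> amalgam_norm n q s \<beta> g"
    unfolding amalgam_Phi by (rule SUP_upper) (use r in auto)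
  finally have *: "mixed_norm n s (boxf n (c' * vlo) a' b') \<le> amalgam_norm n q s \<beta> g" .
  have "mixed_norm n s (boxf n (c' * vlo) a' b') = ennreal (c' * vlo * (\<Prod>i<n. (2*r/n) powr inv_exp (s i)))"
    using mixed_box_full[OF _ ab ss, of "c' * vlo"] c0 vlo0 unfolding a'_def b'_def by simp
  then show ?thesis using * unfolding vlo_def e_def by simp
qed

lemma amalgam_upper_rho:
  assumes n: "n \<ge> 1" and r: "r > 0" and rho: "\<rho> > 0" and E: "E \<in> sets (Rn n)" and Esub: "E \<subseteq> eball n y1 r"
    and pp: "\<forall>i<n. 0 < p i" and ss: "\<forall>i<n. 0 < s i"
  shows "mixed_norm n s (Phi n p s \<alpha> (indicator E) \<rho>) \<le>
    ennreal (max (((2*\<rho>/n)^n) powr (1/\<alpha> - avg_inv n p - avg_inv n s)) (((2*\<rho>)^n) powr (1/\<alpha> - avg_inv n p - avg_inv n s))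
      * min (\<Prod>i<n. (2*\<rho>) powr inv_exp (p i)) (\<Prod>i<n. (2*r) powr inv_exp (p i))
      * (\<Prod>i<n. (2*(\<rho>+r)) powr inv_exp (s i)))"
proof -
  define e where "e = 1/\<alpha> - avg_inv n p - avg_inv n s"
  define vhi where "vhi = max (((2*\<rho>/n)^n) powr e) (((2*\<rho>)^n) powr e)"
  define mn where "mn = min (\<Prod>i<n. (2*\<rho>) powr inv_exp (p i)) (\<Prod>i<n. (2*r) powr inv_exp (p i))"
  define a' where "a' = (\<lambda>i. y1 i - (\<rho>+r))"
  define b' where "b' = (\<lambda>i. y1 i + (\<rho>+r))"
  have vhi0: "vhi \<ge> 0" unfolding vhi_def by (simp add: le_max_iff_disj)
  have mn0: "mn \<ge> 0" unfolding mn_def by (auto intro!: prod_nonneg)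
  have ab: "\<forall>i<n. a' i < b' i" unfolding a'_def b'_def using r rho by auto
  have Em: "indicator E \<in> borel_measurable (Rn n)" using E by measurable
  have pt: "Phi n p s \<alpha> (indicator E) \<rho> y \<le> boxf n (vhi * mn) a' b' y" for y
  proof (cases "\<forall>i<n. y i \<in> {a' i<..<b' i}")
    case False
    then obtain i where i: "i < n" "y i \<notin> {a' i<..<b' i}" by auto
    have z: "indicator (eball n y \<rho>) x * \<bar>indicator E x\<bar> = (0::real)" for x
    proof (cases "x \<in> eball n y \<rho> \<and> x \<in> E")
      case True
      then have "edist n x y < \<rho>" "edist n x y1 < r" using Esub by (auto simp: eball_def)
      then have "\<bar>x i - y i\<bar> < \<rho>" "\<bar>x i - y1 i\<bar> < r"
        using edist_coord[OF i(1), of x y] edist_coord[OF i(1), of x y1] by auto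
      then have "y i \<in> {a' i<..<b' i}" unfolding a'_def b'_def by (auto simp: abs_less_iff)
      then show ?thesis using i by simp
    qed auto
    have "mixed_norm n p (\<lambda>x. ennreal (indicator (eball n y \<rho>) x * \<bar>indicator E x\<bar>)) = 0"
      unfolding z mixed_norm_def by (simp add: mixed_zero)
    then show ?thesis by (simp add: Phi_def)
  next
    case True
    have "(\<Prod>i<n. indicator {a' i<..<b' i} (y i) :: real) = 1"
      using True by (intro prod.neutral) auto
    then have bx: "boxf n (vhi * mn) a' b' y = ennreal vhi * ennreal mn"
      using vhi0 mn0 by (simp add: boxf_def ennreal_mult)
    have V: "vol n (eball n y \<rho>) powr e \<le> vhi"
      unfolding vhi_def using vol_bounds(1,2)[OF n rho, of y] rho n
      by (intro powr_between_hi) auto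
    let ?G = "\<lambda>x. ennreal (indicator (eball n y \<rho>) x * \<bar>indicator E x\<bar>)"
    have Gm: "?G \<in> borel_measurable (Rn n)" using Em by measurable
    have N1: "mixed_norm n p ?G \<le> ennreal (\<Prod>i<n. (2*\<rho>) powr inv_exp (p i))"
    proof -
      have "mixed_norm n p ?G \<le> mixed_norm n p (boxf n 1 (\<lambda>i. y i - \<rho>) (\<lambda>i. y i + \<rho>))"
        unfolding mixed_norm_def
      proof (rule mixed_mono[OF _ Gm order.refl undef_space])
        fix x
        have "?G x \<le> ennreal (indicator (eball n y \<rho>) x)"
          by (intro ennreal_leI) (auto simp: indicator_def)
        also have "\<dots> \<le> boxf n 1 (\<lambda>i. y i - \<rho>) (\<lambda>i. y i + \<rho>) x" by (rule ball_le_boxf)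
        finally show "?G x \<le> boxf n 1 (\<lambda>i. y i - \<rho>) (\<lambda>i. y i + \<rho>) x" .
      qed
      also have "\<dots> = ennreal (\<Prod>i<n. (2*\<rho>) powr inv_exp (p i))"
        using mixed_box_full[of 1 n "\<lambda>i. y i - \<rho>" "\<lambda>i. y i + \<rho>" p] rho pp by simp
      finally show ?thesis .
    qed
    have N2: "mixed_norm n p ?G \<le> ennreal (\<Prod>i<n. (2*r) powr inv_exp (p i))"
    proof -
      have "mixed_norm n p ?G \<le> mixed_norm n p (boxf n 1 (\<lambda>i. y1 i - r) (\<lambda>i. y1 i + r))"
        unfolding mixed_norm_def
      proof (rule mixed_mono[OF _ Gm order.refl undef_space])
        fix x
        have "?G x \<le> ennreal (indicator (eball n y1 r) x)"
          using Esub by (intro ennreal_leI) (auto simp: indicator_def)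
        also have "\<dots> \<le> boxf n 1 (\<lambda>i. y1 i - r) (\<lambda>i. y1 i + r) x" by (rule ball_le_boxf)
        finally show "?G x \<le> boxf n 1 (\<lambda>i. y1 i - r) (\<lambda>i. y1 i + r) x" .
      qed
      also have "\<dots> = ennreal (\<Prod>i<n. (2*r) powr inv_exp (p i))"
        using mixed_box_full[of 1 n "\<lambda>i. y1 i - r" "\<lambda>i. y1 i + r" p] r pp by simp
      finally show ?thesis .
    qed
    have N: "mixed_norm n p ?G \<le> ennreal mn"
      using N1 N2 unfolding mn_def by (simp add: min_def)
    have "ennreal (vol n (eball n y \<rho>) powr e) * mixed_norm n p ?G \<le> ennreal vhi * ennreal mn"
      by (intro mult_mono ennreal_leI V N) auto
    then show ?thesis unfolding bx Phi_def e_def .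
  qed
  have "mixed_norm n s (Phi n p s \<alpha> (indicator E) \<rho>) \<le> mixed_norm n s (boxf n (vhi * mn) a' b')"
    unfolding mixed_norm_def by (rule mixed_mono[OF pt Phi_meas[OF Em] order.refl undef_space])
  also have "\<dots> = ennreal (vhi * mn * (\<Prod>i<n. (2*(\<rho>+r)) powr inv_exp (s i)))"
    using mixed_box_full[OF _ ab ss, of "vhi * mn"] vhi0 mn0 unfolding a'_def b'_def by (simp add: algebra_simps)
  finally show ?thesis unfolding vhi_def mn_def e_def .
qed

lemma prod_powr_const: "(x::real) > 0 \<Longrightarrow> (\<Prod>i<n. x powr (f i)) = x powr (\<Sum>i<n. f i)"
  using powr_sum[of x f "{..<n}"] by simp

lemma pow_powr_e: "x > 0 \<Longrightarrow> ((x::real)^n) powr e = x powr (real n * e)"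
  by (simp add: powr_realpow[symmetric] powr_powr)

lemma upper_scale_real:
  fixes N A P S r \<rho> :: real
  assumes N: "N \<ge> 1" and r: "r > 0" and rho: "\<rho> > 0" and S0: "S \<ge> 0" and SA: "S \<le> A" and AP: "A \<le> P"
  shows "max ((2*\<rho>) powr (A - P - S) * N powr (-(A - P - S))) ((2*\<rho>) powr (A - P - S))
      * min ((2*\<rho>) powr P) ((2*r) powr P) * (2*(\<rho>+r)) powr S
    \<le> (max (N powr (-(A - P - S))) 1 * 2 powr (A + S)) * r powr A"
proof -
  define cn where "cn = max (N powr (-(A - P - S))) 1"
  have cn: "cn \<ge> 1" unfolding cn_def by simp
  have mx: "max ((2*\<rho>) powr (A - P - S) * N powr (-(A - P - S))) ((2*\<rho>) powr (A - P - S)) = (2*\<rho>) powr (A - P - S) * cn"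
  proof -
    have "max (N powr (-(A - P - S))) 1 * (2*\<rho>) powr (A - P - S) = max (N powr (-(A - P - S)) * (2*\<rho>) powr (A - P - S)) (1 * (2*\<rho>) powr (A - P - S))"
      by (subst max_mult_distrib_right) simp
    then show ?thesis unfolding cn_def by (simp add: mult.commute)
  qed
  show ?thesis
  proof (cases "\<rho> \<le> r")
    case True
    have m1: "min ((2*\<rho>) powr P) ((2*r) powr P) \<le> (2*\<rho>) powr P" by simp
    have m2: "(2*(\<rho>+r)) powr S \<le> (4*r) powr S"
      using True rho S0 by (intro powr_mono2) auto
    have "(2*\<rho>) powr (A - P - S) * cn * min ((2*\<rho>) powr P) ((2*r) powr P) * (2*(\<rho>+r)) powr S
        \<le> (2*\<rho>) powr (A - P - S) * cn * (2*\<rho>) powr P * (4*r) powr S"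
      using m1 m2 cn by (intro mult_mono) auto
    also have "\<dots> = cn * ((2*\<rho>) powr (A - S) * (4*r) powr S)"
      using rho by (simp add: powr_add[symmetric] algebra_simps)
    also have "\<dots> \<le> cn * ((2*r) powr (A - S) * (4*r) powr S)"
      using True rho SA cn by (intro mult_left_mono mult_right_mono powr_mono2) auto
    also have "\<dots> = cn * 2 powr (A + S) * r powr A"
    proof -
      have "(2*r) powr (A - S) * (4*r) powr S = 2 powr (A - S) * r powr (A - S) * (4 powr S * r powr S)"
        using r by (simp add: powr_mult)
      also have "4 powr S = 2 powr (2*S)"
        by (simp add: powr_powr[symmetric])
      finally have "(2*r) powr (A - S) * (4*r) powr S = (2 powr (A - S) * 2 powr (2*S)) * (r powr (A - S) * r powr S)"
        by (simp add: algebra_simps)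
      also have "\<dots> = 2 powr (A + S) * r powr A"
        using r by (simp add: powr_add[symmetric] add.commute)
      finally show ?thesis by simp
    qed
    finally show ?thesis unfolding mx cn_def by simp
  next
    case False
    then have rr: "r < \<rho>" by simp
    have m1: "min ((2*\<rho>) powr P) ((2*r) powr P) \<le> (2*r) powr P" by simp
    have m2: "(2*(\<rho>+r)) powr S \<le> (4*\<rho>) powr S"
      using rr r S0 by (intro powr_mono2) auto
    have "(2*\<rho>) powr (A - P - S) * cn * min ((2*\<rho>) powr P) ((2*r) powr P) * (2*(\<rho>+r)) powr S
        \<le> (2*\<rho>) powr (A - P - S) * cn * (2*r) powr P * (4*\<rho>) powr S"
      using m1 m2 cn by (intro mult_mono) auto
    also have "(4*\<rho>) powr S = 2 powr S * (2*\<rho>) powr S"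
      using rho by (simp add: powr_mult[symmetric])
    also have "(2*\<rho>) powr (A - P - S) * cn * (2*r) powr P * (2 powr S * (2*\<rho>) powr S)
        = cn * 2 powr S * ((2*\<rho>) powr (A - P) * (2*r) powr P)"
      using rho by (simp add: powr_add[symmetric] algebra_simps)
    also have "\<dots> \<le> cn * 2 powr S * ((2*r) powr (A - P) * (2*r) powr P)"
      using rr r AP cn by (intro mult_left_mono mult_right_mono powr_mono2') auto
    also have "\<dots> = cn * 2 powr (A + S) * r powr A"
    proof -
      have "(2*r) powr (A - P) * (2*r) powr P = (2*r) powr A"
        using r by (simp add: powr_add[symmetric])
      also have "\<dots> = 2 powr A * r powr A" using r by (simp add: powr_mult)
      finally have "cn * 2 powr S * ((2*r) powr (A - P) * (2*r) powr P) = cn * (2 powr S * 2 powr A) * r powr A"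
        by simp
      also have "2 powr S * 2 powr A = 2 powr (A + S)" by (simp add: powr_add[symmetric] add.commute)
      finally show ?thesis .
    qed
    finally show ?thesis unfolding mx cn_def by simp
  qed
qed

lemma inv_succ_mono: "(k::nat) \<le> l \<Longrightarrow> 1 / (real l + 1) \<le> 1 / (real k + 1)"
  by (simp add: frac_le)

lemma median_exists:
  fixes b :: "'a \<Rightarrow> real"
  assumes b: "b \<in> borel_measurable M" and A: "A \<in> sets M" and fin: "emeasure M A < \<infinity>"
  shows "\<exists>m. ennreal (measure M A / 2) \<le> emeasure M {x\<in>A. b x \<le> m} \<and> ennreal (measure M A / 2) \<le> emeasure M {x\<in>A. m \<le> b x}"
proof (cases "emeasure M A = 0")
  case True
  then show ?thesis by (simp add: measure_def)
next
  case False
  define h where "h = ennreal (measure M A / 2)"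
  define L where "L t = emeasure M {x\<in>A. b x \<le> t}" for t
  have sL: "{x\<in>A. b x \<le> t} \<in> sets M" for t using A b by measurable
  have sG: "{x\<in>A. t < b x} \<in> sets M" for t using A b by measurable
  have sLt: "{x\<in>A. b x < t} \<in> sets M" for t using A b by measurable
  have Lmono: "s \<le> t \<Longrightarrow> L s \<le> L t" for s t
    unfolding L_def by (intro emeasure_mono sL) auto
  have finA: "emeasure M A \<noteq> \<infinity>" using fin by simp
  have Lfin: "L t \<noteq> \<infinity>" for t
    unfolding L_def using emeasure_mono[of "{x\<in>A. b x \<le> t}" A M] A finA by (auto simp: top_unique)
  have eA: "emeasure M A = ennreal (measure M A)" using finA by (simp add: emeasure_eq_ennreal_measure)
  have mpos: "measure M A > 0" using False eA by (metis ennreal_0 measure_nonneg order_le_less)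
  have hpos: "0 < h" unfolding h_def using mpos by simp
  have hlt: "h < emeasure M A" unfolding h_def eA using mpos by (simp add: ennreal_lessI)
  define T where "T = {t. h \<le> L t}"
  have sup: "(SUP k::nat. L (real k)) = emeasure M A"
  proof -
    have "(SUP k::nat. L (real k)) = emeasure M (\<Union>k. {x\<in>A. b x \<le> real k})"
      unfolding L_def by (rule SUP_emeasure_incseq) (auto simp: incseq_def intro: sL)
    also have "(\<Union>k. {x\<in>A. b x \<le> real k}) = A"
      by (auto intro: real_arch_simple)
    finally show ?thesis .
  qed
  obtain k1 :: nat where k1: "h < L (real k1)"
    using hlt unfolding sup[symmetric] by (auto simp: less_SUP_iff)
  have inf: "(INF k::nat. L (- real k)) = 0"
  proof -
    have "(INF k::nat. L (- real k)) = emeasure M (\<Inter>k. {x\<in>A. b x \<le> - real k})"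
      unfolding L_def
    proof (rule INF_emeasure_decseq)
      show "range (\<lambda>k::nat. {x\<in>A. b x \<le> - real k}) \<subseteq> sets M" using sL by auto
      show "decseq (\<lambda>k::nat. {x\<in>A. b x \<le> - real k})" by (auto simp: decseq_def)
      fix i :: nat show "emeasure M {x\<in>A. b x \<le> - real i} \<noteq> \<infinity>"
        using Lfin[of "- real i"] by (simp add: L_def)
    qed
    also have "(\<Inter>k. {x\<in>A. b x \<le> - real k}) = {}"
    proof -
      have "\<exists>k::nat. - real k < b x" for x
        using reals_Archimedean2[of "- b x"] by (auto simp: minus_less_iff)
      show ?thesis
      proof (intro equalityI subsetI)
        fix x assume x: "x \<in> (\<Inter>k. {x\<in>A. b x \<le> - real k})"
        obtain k :: nat where "- real k < b x" using \<open>\<And>x. \<exists>k::nat. - real k < b x\<close> by blast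
        moreover have "b x \<le> - real k" using x by blast
        ultimately show "x \<in> {}" by linarith
      qed simp
    qed
    finally show ?thesis by simp
  qed
  obtain k2 :: nat where k2: "L (- real k2) < h"
    using hpos unfolding inf[symmetric] by (auto simp: INF_less_iff)
  have Tne: "T \<noteq> {}" using k1 unfolding T_def by (auto intro!: exI[of _ "real k1"] less_imp_le)
  have Tbdd: "bdd_below T"
  proof (rule bdd_belowI)
    fix t assume "t \<in> T"
    then have "h \<le> L t" by (simp add: T_def)
    then show "- real k2 \<le> t" using k2 Lmono[of t "- real k2"] by (metis le_less_trans linear not_le)
  qed
  define m where "m = Inf T"
  have Lm: "h \<le> L m"
  proof -
    have "h \<le> L (m + 1 / (real k + 1))" for k :: nat
    proof -
      have "m < m + 1 / (real k + 1)" by simp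
      then obtain t where t: "t \<in> T" "t < m + 1 / (real k + 1)"
        unfolding m_def using cInf_lessD[OF Tne] by blast
      then have "L t \<le> L (m + 1 / (real k + 1))" using Lmono by simp
      moreover have "h \<le> L t" using t(1) by (simp add: T_def)
      ultimately show ?thesis by (rule order.trans[rotated])
    qed
    then have "h \<le> (INF k::nat. L (m + 1 / (real k + 1)))" by (rule INF_greatest)
    also have "(INF k::nat. L (m + 1 / (real k + 1))) = emeasure M (\<Inter>k. {x\<in>A. b x \<le> m + 1 / (real k + 1)})"
      unfolding L_def
    proof (rule INF_emeasure_decseq)
      show "decseq (\<lambda>k. {x\<in>A. b x \<le> m + 1 / (real k + 1)})"
        unfolding decseq_def
      proof (intro allI impI subsetI)
        fix k l :: nat and x assume kl: "k \<le> l" and x: "x \<in> {x\<in>A. b x \<le> m + 1 / (real l + 1)}"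
        have "b x \<le> m + 1 / (real l + 1)" using x by simp
        then have "b x \<le> m + 1 / (real k + 1)" using inv_succ_mono[OF kl] by linarith
        then show "x \<in> {x\<in>A. b x \<le> m + 1 / (real k + 1)}" using x by simp
      qed
      show "range (\<lambda>k::nat. {x\<in>A. b x \<le> m + 1 / (real k + 1)}) \<subseteq> sets M" using sL by auto
      fix i :: nat show "emeasure M {x\<in>A. b x \<le> m + 1 / (real i + 1)} \<noteq> \<infinity>"
        using Lfin[of "m + 1 / (real i + 1)"] by (simp add: L_def)
    qed
    also have "(\<Inter>k. {x\<in>A. b x \<le> m + 1 / (real k + 1)}) = {x\<in>A. b x \<le> m}"
    proof (intro set_eqI iffI)
      fix x assume x: "x \<in> (\<Inter>k. {x\<in>A. b x \<le> m + 1 / (real k + 1)})"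
      have "b x \<le> m"
      proof (rule ccontr)
        assume "\<not> b x \<le> m"
        then have "0 < b x - m" by simp
        then obtain k :: nat where "1 / real (Suc k) < b x - m"
          by (rule nat_approx_posE)
        then have "1 / (real k + 1) < b x - m" by (simp add: add.commute)
        moreover have "b x \<le> m + 1 / (real k + 1)" using x by blast
        ultimately show False by linarith
      qed
      then show "x \<in> {x\<in>A. b x \<le> m}" using x by auto
    next
      fix x assume "x \<in> {x\<in>A. b x \<le> m}"
      then show "x \<in> (\<Inter>k. {x\<in>A. b x \<le> m + 1 / (real k + 1)})"
      proof (intro InterI)
        fix X assume "X \<in> range (\<lambda>k. {x\<in>A. b x \<le> m + 1 / (real k + 1)})"
        then obtain k :: nat where X: "X = {x\<in>A. b x \<le> m + 1 / (real k + 1)}" by auto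
        have "0 \<le> 1 / (real k + 1)" by simp
        moreover have "x \<in> A" "b x \<le> m" using \<open>x \<in> {x\<in>A. b x \<le> m}\<close> by auto
        ultimately have "b x \<le> m + 1 / (real k + 1)" by linarith
        then show "x \<in> X" unfolding X using \<open>x \<in> A\<close> by simp
      qed
    qed
    finally show ?thesis unfolding L_def .
  qed
  have Gm: "h \<le> emeasure M {x\<in>A. m \<le> b x}"
  proof -
    have "L (m - 1 / (real k + 1)) < h" for k :: nat
    proof (rule ccontr)
      assume "\<not> L (m - 1 / (real k + 1)) < h"
      then have "m - 1 / (real k + 1) \<in> T" unfolding T_def by (simp add: not_less)
      then have "m \<le> m - 1 / (real k + 1)" unfolding m_def by (rule cInf_lower[OF _ Tbdd])
      then show False by simp
    qed
    then have "(SUP k::nat. L (m - 1 / (real k + 1))) \<le> h" by (intro SUP_least less_imp_le)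
    moreover have "(SUP k::nat. L (m - 1 / (real k + 1))) = emeasure M (\<Union>k. {x\<in>A. b x \<le> m - 1 / (real k + 1)})"
      unfolding L_def
    proof (rule SUP_emeasure_incseq)
      show "incseq (\<lambda>k. {x\<in>A. b x \<le> m - 1 / (real k + 1)})"
        unfolding incseq_def
      proof (intro allI impI subsetI)
        fix k l :: nat and x assume kl: "k \<le> l" and x: "x \<in> {x\<in>A. b x \<le> m - 1 / (real k + 1)}"
        have "b x \<le> m - 1 / (real k + 1)" using x by simp
        then have "b x \<le> m - 1 / (real l + 1)" using inv_succ_mono[OF kl] by linarith
        then show "x \<in> {x\<in>A. b x \<le> m - 1 / (real l + 1)}" using x by simp
      qed
    qed (auto intro: sL)
    moreover have "(\<Union>k. {x\<in>A. b x \<le> m - 1 / (real k + 1)}) = {x\<in>A. b x < m}"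
    proof (intro set_eqI iffI)
      fix x assume "x \<in> (\<Union>k. {x\<in>A. b x \<le> m - 1 / (real k + 1)})"
      then obtain k :: nat where "x \<in> A" "b x \<le> m - 1 / (real k + 1)" by auto
      moreover have "0 < 1 / (real k + 1)" by simp
      ultimately have "x \<in> A" "b x < m" by linarith+
      then show "x \<in> {x\<in>A. b x < m}" by simp
    next
      fix x assume x: "x \<in> {x\<in>A. b x < m}"
      then have "0 < m - b x" by simp
      then obtain k :: nat where "1 / real (Suc k) < m - b x"
        by (rule nat_approx_posE)
      then have "1 / (real k + 1) < m - b x" by (simp add: add.commute)
      then have "x \<in> {x\<in>A. b x \<le> m - 1 / (real k + 1)}" using x by simp
      then show "x \<in> (\<Union>k. {x\<in>A. b x \<le> m - 1 / (real k + 1)})" by blast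
    qed
    ultimately have lt: "emeasure M {x\<in>A. b x < m} \<le> h" by simp
    have eqd: "{x\<in>A. m \<le> b x} = A - {x\<in>A. b x < m}" by auto
    have fl: "emeasure M {x\<in>A. b x < m} \<noteq> \<infinity>"
      using emeasure_mono[of "{x\<in>A. b x < m}" A M] A finA by (auto simp: top_unique)
    have "emeasure M {x\<in>A. m \<le> b x} = emeasure M A - emeasure M {x\<in>A. b x < m}"
      unfolding eqd by (rule emeasure_Diff[OF fl A sLt]) auto
    also have "\<dots> \<ge> emeasure M A - h" using lt by (simp add: ennreal_minus_mono)
    also have "emeasure M A - h = h" unfolding h_def eA using mpos
      by (subst ennreal_minus) auto
    finally show ?thesis .
  qed
  show ?thesis using Lm Gm unfolding h_def L_def by blast
qed

lemma comm_lower: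
  assumes n1: "n \<ge> 1" and lb: "loc_int n b" and y1: "y1 \<in> space (Rn n)" and r: "r > 0" and x: "x \<in> space (Rn n)"
    and dist: "\<And>z. z \<in> eball n y1 r \<Longrightarrow> r \<le> edist n x z \<and> edist n x z \<le> 5*r"
    and E: "E \<in> sets (Rn n)" and Esub: "E \<subseteq> eball n y1 r" and Em: "\<And>z. z \<in> E \<Longrightarrow> b z \<le> m"
    and bx: "m \<le> b x" and g: "\<gamma> < real n" and C: "C > 0"
  shows "C * (5*r) powr (\<gamma> - real n) * measure (Rn n) E * (b x - m) \<le> commutator n C \<gamma> b (indicator E) x"
proof -
  let ?B = "eball n y1 r"
  define F where "F z = (b x - b z) * indicator E z / edist n x z powr (real n - \<gamma>)" for z
  define G where "G z = (b x - m) * (5*r) powr (\<gamma> - real n) * indicator E z" for z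
  have bm: "b \<in> borel_measurable (Rn n)" by (rule loc_int_meas[OF lb])
  have Bfin: "emeasure (Rn n) ?B < \<infinity>" by (rule vol_bounds(3)) (use r n1 in auto)
  have Efin: "emeasure (Rn n) E < \<infinity>"
    using emeasure_mono[OF Esub eball_sets] Bfin by (simp add: le_less_trans)
  have em: "(\<lambda>z. edist n x z) \<in> borel_measurable (Rn n)"
    by (rule edist_meas) (use x in auto)
  have Fm: "F \<in> borel_measurable (Rn n)" unfolding F_def using bm em E by measurable
  have Gi: "integrable (Rn n) G" unfolding G_def using E Efin by simp
  have bi: "integrable (Rn n) (\<lambda>z. indicator ?B z * b z)"
    using lb y1 r unfolding loc_int_def set_integrable_def by auto
  have Bi: "integrable (Rn n) (\<lambda>z. indicator ?B z :: real)" using Bfin by simp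
  have Hi: "integrable (Rn n) (\<lambda>z. (\<bar>b x\<bar> * indicator ?B z + \<bar>indicator ?B z * b z\<bar>) / r powr (real n - \<gamma>))"
    using bi Bi by (intro integrable_divide integrable_add integrable_mult_right integrable_abs) auto
  have Fi: "integrable (Rn n) F"
  proof (rule Bochner_Integration.integrable_bound[OF Hi Fm], rule AE_I2)
    fix z assume z: "z \<in> space (Rn n)"
    show "norm (F z) \<le> norm ((\<bar>b x\<bar> * indicator ?B z + \<bar>indicator ?B z * b z\<bar>) / r powr (real n - \<gamma>))"
    proof (cases "z \<in> E")
      case False then show ?thesis by (simp add: F_def)
    next
      case True
      then have zB: "z \<in> ?B" using Esub by auto
      have d: "r \<le> edist n x z" using dist[OF zB] by simp
      have D: "r powr (real n - \<gamma>) \<le> edist n x z powr (real n - \<gamma>)"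
        using d r g by (intro powr_mono2) auto
      have Dp: "0 < r powr (real n - \<gamma>)" using r by simp
      have "\<bar>F z\<bar> = \<bar>b x - b z\<bar> / edist n x z powr (real n - \<gamma>)"
        using True by (simp add: F_def)
      also have "\<dots> \<le> \<bar>b x - b z\<bar> / r powr (real n - \<gamma>)"
        using D Dp by (intro divide_left_mono) (auto intro: mult_pos_pos less_le_trans[OF Dp D])
      also have "\<dots> \<le> (\<bar>b x\<bar> + \<bar>b z\<bar>) / r powr (real n - \<gamma>)"
        using Dp by (intro divide_right_mono) auto
      finally show ?thesis using zB Dp by simp
    qed
  qed
  have FG: "G z \<le> F z" for z
  proof (cases "z \<in> E")
    case False then show ?thesis by (simp add: F_def G_def)
  next
    case True
    then have zB: "z \<in> ?B" using Esub by auto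
    have d: "edist n x z \<le> 5*r" "r \<le> edist n x z" using dist[OF zB] by auto
    define D where "D = edist n x z powr (real n - \<gamma>)"
    have Dp: "0 < D" unfolding D_def using d r by simp
    have D5: "D \<le> (5*r) powr (real n - \<gamma>)" unfolding D_def using d r g by (intro powr_mono2) auto
    have inv: "(5*r) powr (\<gamma> - real n) = 1 / (5*r) powr (real n - \<gamma>)"
      using r by (simp add: powr_minus_divide[symmetric])
    have bm0: "0 \<le> b x - m" using bx by simp
    have "G z = (b x - m) / (5*r) powr (real n - \<gamma>)" using True by (simp add: G_def inv)
    also have "\<dots> \<le> (b x - m) / D" using bm0 Dp D5 by (intro divide_left_mono) (auto intro: mult_pos_pos less_le_trans[OF Dp D5])
    also have "\<dots> \<le> (b x - b z) / D" using Em[OF True] Dp by (intro divide_right_mono) auto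
    also have "\<dots> = F z" using True by (simp add: F_def D_def)
    finally show ?thesis .
  qed
  have "integral\<^sup>L (Rn n) G \<le> integral\<^sup>L (Rn n) F" by (rule integral_mono[OF Gi Fi FG])
  moreover have "integral\<^sup>L (Rn n) G = (b x - m) * (5*r) powr (\<gamma> - real n) * measure (Rn n) E"
    unfolding G_def using E by (simp add: Int_absorb2 sets.sets_into_space)
  ultimately have "(b x - m) * (5*r) powr (\<gamma> - real n) * measure (Rn n) E \<le> integral\<^sup>L (Rn n) F" by simp
  then have "C * ((b x - m) * (5*r) powr (\<gamma> - real n) * measure (Rn n) E) \<le> C * integral\<^sup>L (Rn n) F"
    using C by simp
  then show ?thesis unfolding commutator_def F_def by (simp add: mult_ac)
qed

lemma inv_exp_nonneg: "0 \<le> inv_exp p"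
  by (simp add: inv_exp_def)

lemma ne_eq:
  assumes n1: "n \<ge> 1"
  shows "real n * (1/\<alpha> - avg_inv n p - avg_inv n s) = real n / \<alpha> - (\<Sum>i<n. inv_exp (p i)) - (\<Sum>i<n. inv_exp (s i))"
  using n1 by (simp add: avg_inv_def field_simps)

lemma pow_div_powr:
  assumes "x > 0" "real n \<ge> 1"
  shows "((x / real n)^n) powr e = x powr (real n * e) * real n powr (- (real n * e))"
proof -
  have "((x / real n)^n) powr e = (x / real n) powr (real n * e)"
    using assms by (intro pow_powr_e) auto
  also have "\<dots> = x powr (real n * e) / real n powr (real n * e)"
    using assms by (simp add: powr_divide)
  also have "\<dots> = x powr (real n * e) * real n powr (- (real n * e))"
    using assms by (simp add: powr_minus divide_inverse)
  finally show ?thesis .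
qed

lemma amalgam_ind_bound:
  assumes n1: "n \<ge> 1" and r: "r > 0" and E: "E \<in> sets (Rn n)" and Esub: "E \<subseteq> eball n y1 r"
    and pp: "\<forall>i<n. 0 < p i" and ss: "\<forall>i<n. 0 < s i"
    and a1: "avg_inv n s \<le> 1/\<alpha>" and a2: "1/\<alpha> \<le> avg_inv n p"
  shows "amalgam_norm n p s \<alpha> (indicator E) \<le>
    ennreal ((max (real n powr (-(real n/\<alpha> - (\<Sum>i<n. inv_exp (p i)) - (\<Sum>i<n. inv_exp (s i))))) 1
             * 2 powr (real n/\<alpha> + (\<Sum>i<n. inv_exp (s i)))) * r powr (real n / \<alpha>))"
  unfolding amalgam_Phi
proof (rule SUP_least)
  fix \<rho> :: real assume "\<rho> \<in> {0<..}"
  then have rho: "\<rho> > 0" by simp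
  define Pb where "Pb = (\<Sum>i<n. inv_exp (p i))"
  define Sb where "Sb = (\<Sum>i<n. inv_exp (s i))"
  define e where "e = 1/\<alpha> - avg_inv n p - avg_inv n s"
  have ne: "real n * e = real n / \<alpha> - Pb - Sb" unfolding e_def Pb_def Sb_def by (rule ne_eq[OF n1])
  have S0: "Sb \<ge> 0" unfolding Sb_def by (intro sum_nonneg inv_exp_nonneg)
  have SA: "Sb \<le> real n / \<alpha>" using a1 n1 unfolding Sb_def avg_inv_def by (simp add: field_simps)
  have AP: "real n / \<alpha> \<le> Pb" using a2 n1 unfolding Pb_def avg_inv_def by (simp add: field_simps)
  have nn: "real n \<ge> 1" using n1 by simp
  have X1: "((2*\<rho>/n)^n) powr e = (2*\<rho>) powr (real n/\<alpha> - Pb - Sb) * real n powr (-(real n/\<alpha> - Pb - Sb))"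
    using pow_div_powr[of "2*\<rho>" n e] rho nn unfolding ne by simp
  have X2: "((2*\<rho>)^n) powr e = (2*\<rho>) powr (real n/\<alpha> - Pb - Sb)"
    using pow_powr_e[of "2*\<rho>" n e] rho unfolding ne by simp
  have X3: "(\<Prod>i<n. (2*\<rho>) powr inv_exp (p i)) = (2*\<rho>) powr Pb"
    unfolding Pb_def using rho by (intro prod_powr_const) simp
  have X4: "(\<Prod>i<n. (2*r) powr inv_exp (p i)) = (2*r) powr Pb"
    unfolding Pb_def using r by (intro prod_powr_const) simp
  have X5: "(\<Prod>i<n. (2*(\<rho>+r)) powr inv_exp (s i)) = (2*(\<rho>+r)) powr Sb"
    unfolding Sb_def using r rho by (intro prod_powr_const) simp
  have "mixed_norm n s (Phi n p s \<alpha> (indicator E) \<rho>) \<le>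
    ennreal (max (((2*\<rho>/n)^n) powr e) (((2*\<rho>)^n) powr e)
      * min (\<Prod>i<n. (2*\<rho>) powr inv_exp (p i)) (\<Prod>i<n. (2*r) powr inv_exp (p i))
      * (\<Prod>i<n. (2*(\<rho>+r)) powr inv_exp (s i)))"
    unfolding e_def by (rule amalgam_upper_rho[OF n1 r rho E Esub pp ss])
  also have "\<dots> \<le> ennreal ((max (real n powr (-(real n/\<alpha> - Pb - Sb))) 1 * 2 powr (real n/\<alpha> + Sb)) * r powr (real n / \<alpha>))"
    unfolding X1 X2 X3 X4 X5
    by (intro ennreal_leI upper_scale_real[OF nn r rho S0 SA AP])
  finally show "mixed_norm n s (Phi n p s \<alpha> (indicator E) \<rho>) \<le> ennreal ((max (real n powr (-(real n/\<alpha> - (\<Sum>i<n. inv_exp (p i)) - (\<Sum>i<n. inv_exp (s i))))) 1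
             * 2 powr (real n/\<alpha> + (\<Sum>i<n. inv_exp (s i)))) * r powr (real n / \<alpha>))"
    unfolding Pb_def Sb_def .
qed

lemma ind_loc_int:
  assumes n1: "n \<ge> 1" and E: "E \<in> sets (Rn n)"
  shows "loc_int n (indicator E)"
  unfolding loc_int_def set_integrable_def
proof (intro ballI allI impI)
  fix y :: "nat \<Rightarrow> real" and \<rho> :: real assume "y \<in> space (Rn n)" "\<rho> > 0"
  then have fin: "emeasure (Rn n) (eball n y \<rho> \<inter> E) < \<infinity>"
    using vol_bounds(3)[OF n1, of \<rho> y] emeasure_mono[of "eball n y \<rho> \<inter> E" "eball n y \<rho>" "Rn n"]
    by (auto simp: le_less_trans)
  have "integrable (Rn n) (indicator (eball n y \<rho> \<inter> E) :: _ \<Rightarrow> real)"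
    using fin E by (intro integrable_real_indicator) auto
  moreover have "(\<lambda>x. indicator (eball n y \<rho>) x *\<^sub>R indicator E x :: real) = indicator (eball n y \<rho> \<inter> E)"
    by (auto simp: indicator_def)
  ultimately show "integrable (Rn n) (\<lambda>x. indicator (eball n y \<rho>) x *\<^sub>R indicator E x :: real)"
    by simp
qed

lemma ennreal_bound_from_test:
  fixes N X :: ennreal
  assumes L: "L > 0" and V: "V \<ge> 0" and XV: "X \<le> ennreal V"
    and test: "\<And>c. c \<ge> 0 \<Longrightarrow> ennreal c \<le> N \<Longrightarrow> ennreal (c * L) \<le> X"
  shows "N \<le> ennreal (V / L)"
proof (cases N)
  case (real c0)
  have "ennreal (c0 * L) \<le> ennreal V" using test[of c0] real XV by (auto intro: order_trans)
  then have "c0 * L \<le> V" using V by (simp add: ennreal_le_iff)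
  then have "c0 \<le> V / L" using L by (simp add: field_simps)
  then show ?thesis using real by (simp add: ennreal_leI)
next
  case top
  have c: "V / L + 1 \<ge> 0" using V L by simp
  have "ennreal ((V / L + 1) * L) \<le> ennreal V" using test[OF c] top XV by (auto intro: order_trans)
  then have "(V / L + 1) * L \<le> V" using V by (simp add: ennreal_le_iff)
  moreover have "(V / L + 1) * L = V + L" using L by (simp add: field_simps)
  ultimately have "V + L \<le> V" by simp
  then show ?thesis using L by simp
qed

lemma aux_ac: "(a::real) * ((b * c) * d) = (b * a * c) * d"
  by (simp add: algebra_simps)

lemma Lterm_eq:
  assumes n1: "n \<ge> 1" and r: "r > 0"
  shows "min (((4*r/n)^n) powr (1/\<beta> - avg_inv n q - avg_inv n s)) (((4*r)^n) powr (1/\<beta> - avg_inv n q - avg_inv n s))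
      * (\<Prod>i<n. (2*r/n) powr inv_exp (s i))
    = (4 powr (real n/\<beta> - (\<Sum>i<n. inv_exp (q i)) - (\<Sum>i<n. inv_exp (s i))) * min (real n powr (-(real n/\<beta> - (\<Sum>i<n. inv_exp (q i)) - (\<Sum>i<n. inv_exp (s i))))) 1
       * (2 / real n) powr (\<Sum>i<n. inv_exp (s i))) * r powr (real n/\<beta> - (\<Sum>i<n. inv_exp (q i)))"
proof -
  define Qb where "Qb = (\<Sum>i<n. inv_exp (q i))"
  define Sb where "Sb = (\<Sum>i<n. inv_exp (s i))"
  define e where "e = 1/\<beta> - avg_inv n q - avg_inv n s"
  define E where "E = real n/\<beta> - Qb - Sb"
  have ne: "real n * e = E" unfolding e_def E_def Qb_def Sb_def by (rule ne_eq[OF n1])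
  have nn: "real n \<ge> 1" using n1 by simp
  have X1: "((4*r/n)^n) powr e = (4*r) powr E * real n powr (-E)"
    using pow_div_powr[of "4*r" n e] r nn unfolding ne by simp
  have X2: "((4*r)^n) powr e = (4*r) powr E"
    using pow_powr_e[of "4*r" n e] r unfolding ne by simp
  have X3: "(\<Prod>i<n. (2*r/n) powr inv_exp (s i)) = (2*r/n) powr Sb"
    unfolding Sb_def using r nn by (intro prod_powr_const) simp
  have mn: "min ((4*r) powr E * real n powr (-E)) ((4*r) powr E) = min (real n powr (-E)) 1 * (4*r) powr E"
  proof -
    have "min (real n powr (-E)) 1 * (4*r) powr E = min (real n powr (-E) * (4*r) powr E) (1 * (4*r) powr E)"
      by (subst min_mult_distrib_right) simp
    then show ?thesis by (simp add: mult.commute)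
  qed
  have "min (((4*r/n)^n) powr e) (((4*r)^n) powr e) * (\<Prod>i<n. (2*r/n) powr inv_exp (s i))
      = min (real n powr (-E)) 1 * ((4*r) powr E * (2*r/n) powr Sb)"
    unfolding X1 X2 X3 mn by simp
  also have "(4*r) powr E * (2*r/n) powr Sb = (4 powr E * (2/n) powr Sb) * (r powr E * r powr Sb)"
  proof -
    have "(2*r/n) powr Sb = ((2/n) * r) powr Sb" by simp
    also have "\<dots> = (2/n) powr Sb * r powr Sb" using r nn by (simp only: powr_mult[of "2/n" r Sb] less_imp_le zero_le_divide_iff zero_le_numeral of_nat_0_le_iff)
    finally have "(2*r/n) powr Sb = (2/n) powr Sb * r powr Sb" .
    moreover have "(4*r) powr E = 4 powr E * r powr E" using r by (simp add: powr_mult)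
    ultimately show ?thesis by simp
  qed
  also have "r powr E * r powr Sb = r powr (real n/\<beta> - Qb)"
    unfolding E_def by (simp add: powr_add[symmetric])
  finally have X: "min (((4*r/n)^n) powr e) (((4*r)^n) powr e) * (\<Prod>i<n. (2*r/n) powr inv_exp (s i))
      = min (real n powr (-E)) 1 * ((4 powr E * (2/n) powr Sb) * r powr (real n/\<beta> - Qb))" .
  have "min (((4*r/n)^n) powr e) (((4*r)^n) powr e) * (\<Prod>i<n. (2*r/n) powr inv_exp (s i))
      = (4 powr E * min (real n powr (-E)) 1 * (2/n) powr Sb) * r powr (real n/\<beta> - Qb)"
    unfolding X by (rule aux_ac)
  then show ?thesis unfolding e_def E_def Qb_def Sb_def .
qed

lemma Lam_eq:
  assumes r: "r > 0" and qq: "\<forall>i<n. 1 < q i \<and> q i < \<infinity>"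
  shows "(\<Prod>i<n. ((y0 i + r) - (y0 i - r)) powr (1 - 1 / enn2real (q i))) = 2 powr (real n - (\<Sum>i<n. inv_exp (q i))) * r powr (real n - (\<Sum>i<n. inv_exp (q i)))"
proof -
  have "(\<Prod>i<n. ((y0 i + r) - (y0 i - r)) powr (1 - 1 / enn2real (q i))) = (\<Prod>i<n. (2*r) powr (1 - inv_exp (q i)))"
    using qq by (intro prod.cong) (auto simp: inv_exp_def)
  also have "\<dots> = (2*r) powr (\<Sum>i<n. (1 - inv_exp (q i)))" using r by (intro prod_powr_const) simp
  also have "(\<Sum>i<n. (1 - inv_exp (q i))) = real n - (\<Sum>i<n. inv_exp (q i))"
    by (simp add: sum_subtractf)
  also have "(2*r) powr (real n - (\<Sum>i<n. inv_exp (q i))) = 2 powr (real n - (\<Sum>i<n. inv_exp (q i))) * r powr (real n - (\<Sum>i<n. inv_exp (q i)))"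
    using r by (simp add: powr_mult)
  finally show ?thesis .
qed

lemma final_alg:
  fixes r c1 c1' Lt L0 Lam U U0 K' N Qb A B \<gamma> :: real
  assumes r: "r > 0" and c1: "c1 \<ge> c1' * r powr \<gamma>" and c1': "c1' > 0" and Lt: "Lt = L0 * r powr (B - Qb)" and L0: "L0 > 0"
    and Lam: "Lam = 2 powr (N - Qb) * r powr (N - Qb)" and U: "U = U0 * r powr A" and K': "K' \<ge> 0" and U0: "U0 \<ge> 0"
    and g: "\<gamma> = A - B"
  shows "Lam * (K' * U / Lt) / c1 \<le> (2 powr (N - Qb) * K' * U0 / (c1' * L0)) * r powr N"
proof -
  define num where "num = 2 powr (N - Qb) * K' * U0"
  have num0: "num \<ge> 0" unfolding num_def using K' U0 by simp
  have dpos: "0 < c1' * r powr \<gamma> * Lt" using c1' r L0 Lt by simp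
  have "0 < c1' * r powr \<gamma>" using c1' r by simp
  then have c1p: "0 < c1" using c1 by linarith
  have Ltp: "0 < Lt" using Lt L0 r by simp
  have LKU: "Lam * K' * U = num * (r powr (N - Qb) * r powr A)"
    unfolding num_def Lam U by (simp add: ac_simps)
  have "Lam * (K' * U / Lt) / c1 = (Lam * K' * U) / (c1 * Lt)"
    by (simp add: ac_simps)
  also have "\<dots> = num * (r powr (N - Qb) * r powr A) / (c1 * Lt)"
    by (simp only: LKU)
  also have "\<dots> \<le> (num * (r powr (N - Qb) * r powr A)) / (c1' * r powr \<gamma> * Lt)"
  proof (rule divide_left_mono)
    show "c1' * r powr \<gamma> * Lt \<le> c1 * Lt" using c1 Ltp by (intro mult_right_mono) auto
    show "0 \<le> num * (r powr (N - Qb) * r powr A)" using num0 by simp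
    show "0 < c1 * Lt * (c1' * r powr \<gamma> * Lt)" using c1p Ltp dpos by simp
  qed
  also have "\<dots> = num / (c1' * L0) * ((r powr (N - Qb) * r powr A) / (r powr \<gamma> * r powr (B - Qb)))"
    unfolding Lt by (simp add: field_simps)
  also have "(r powr (N - Qb) * r powr A) / (r powr \<gamma> * r powr (B - Qb)) = r powr N"
  proof -
    have "(r powr (N - Qb) * r powr A) = r powr (N - Qb + A)" by (simp add: powr_add)
    moreover have "r powr \<gamma> * r powr (B - Qb) = r powr (\<gamma> + (B - Qb))" by (simp add: powr_add)
    moreover have "r powr (N - Qb + A) / r powr (\<gamma> + (B - Qb)) = r powr N"
      using g by (simp add: powr_diff[symmetric])
    ultimately show ?thesis by simp
  qed
  finally show ?thesis unfolding num_def by simp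
qed

definition T0c :: "nat \<Rightarrow> (nat\<Rightarrow>ennreal) \<Rightarrow> (nat\<Rightarrow>ennreal) \<Rightarrow> (nat\<Rightarrow>ennreal) \<Rightarrow> real \<Rightarrow> real \<Rightarrow> real \<Rightarrow> real \<Rightarrow> real \<Rightarrow> real" where
  "T0c n p q s \<alpha> \<beta> \<gamma> C K =
     2 powr (real n - (\<Sum>i<n. inv_exp (q i))) * max K 0
     * (max (real n powr (-(real n/\<alpha> - (\<Sum>i<n. inv_exp (p i)) - (\<Sum>i<n. inv_exp (s i))))) 1
             * 2 powr (real n/\<alpha> + (\<Sum>i<n. inv_exp (s i))))
     / ((C * 5 powr (\<gamma> - real n) * (2 / real n)^n / 2) *
        (4 powr (real n/\<beta> - (\<Sum>i<n. inv_exp (q i)) - (\<Sum>i<n. inv_exp (s i))) * min (real n powr (-(real n/\<beta> - (\<Sum>i<n. inv_exp (q i)) - (\<Sum>i<n. inv_exp (s i))))) 1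
       * (2 / real n) powr (\<Sum>i<n. inv_exp (s i))))"

lemma edist_shift:
  assumes n0: "0 < n" and r: "r > 0"
  shows "edist n y0 (y0(0 := y0 0 + 3*r)) = 3*r"
proof -
  have "(\<Sum>i<n. (y0 i - (y0(0 := y0 0 + 3*r)) i)\<^sup>2) = (\<Sum>i<n. if i = 0 then (3*r)\<^sup>2 else 0)"
    by (intro sum.cong) (auto simp: power2_eq_square)
  also have "\<dots> = (3*r)\<^sup>2" using n0 by simp
  finally have "(\<Sum>i<n. (y0 i - (y0(0 := y0 0 + 3*r)) i)\<^sup>2) = (3*r)\<^sup>2" .
  then show ?thesis unfolding edist_def using r by (simp only: real_sqrt_abs abs_of_pos)
qed

lemma half_bound:
  assumes n1: "n \<ge> 1" and g0: "\<gamma> < real n" and C: "C > 0"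
    and pp: "\<forall>i<n. 1 < p i \<and> p i < \<infinity>" and qq: "\<forall>i<n. 1 < q i \<and> q i < \<infinity>" and ss: "\<forall>i<n. 1 < s i"
    and a1: "avg_inv n s \<le> 1/\<alpha>" and a2: "1/\<alpha> \<le> avg_inv n p"
    and gam: "\<gamma> = real n/\<alpha> - real n/\<beta>"
    and lb: "loc_int n b"
    and Kh: "\<forall>f. in_amalgam n p s \<alpha> f \<longrightarrow> amalgam_norm n q s \<beta> (commutator n C \<gamma> b f) \<le> ennreal K * amalgam_norm n p s \<alpha> f"
    and y0: "y0 \<in> space (Rn n)" and r: "r > 0"
    and med: "ennreal (measure (Rn n) (eball n (y0(0 := y0 0 + 3*r)) r) / 2) \<le> emeasure (Rn n) {z \<in> eball n (y0(0 := y0 0 + 3*r)) r. b z \<le> m}"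
  shows "(\<integral>\<^sup>+x. ennreal (indicator (eball n y0 r) x * max 0 (b x - m)) \<partial>Rn n) \<le> ennreal (T0c n p q s \<alpha> \<beta> \<gamma> C K * r powr real n)"
proof -
  define y1 where "y1 = y0(0 := y0 0 + 3*r)"
  define B where "B = eball n y0 r"
  define B' where "B' = eball n y1 r"
  define E where "E = {z \<in> B'. b z \<le> m}"
  define g where "g = commutator n C \<gamma> b (indicator E)"
  have n0: "0 < n" using n1 by simp
  have y1s: "y1 \<in> space (Rn n)" unfolding y1_def using upd_space[OF y0 n0] .
  have bm: "b \<in> borel_measurable (Rn n)" by (rule loc_int_meas[OF lb])
  have Es: "E \<in> sets (Rn n)"
  proof -
    have "{z \<in> space (Rn n). b z \<le> m} \<in> sets (Rn n)" using bm by measurable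
    moreover have "E = B' \<inter> {z \<in> space (Rn n). b z \<le> m}"
      unfolding E_def B'_def eball_def by auto
    ultimately show ?thesis unfolding B'_def using eball_sets by auto
  qed
  have Esub: "E \<subseteq> eball n y1 r" by (auto simp: E_def B'_def)
  have Em: "\<And>z. z \<in> E \<Longrightarrow> b z \<le> m" by (simp add: E_def)
  have d01: "edist n y0 y1 = 3*r" unfolding y1_def by (rule edist_shift[OF n0 r])
  have dist: "r \<le> edist n x z \<and> edist n x z \<le> 5*r" if x: "x \<in> B" and z: "z \<in> B'" for x z
  proof
    have dx: "edist n x y0 < r" using x by (simp add: B_def eball_def)
    have dz: "edist n z y1 < r" using z by (simp add: B'_def eball_def)
    have "edist n x z \<le> edist n x y0 + edist n y0 z" by (rule edist_tri)
    also have "edist n y0 z \<le> edist n y0 y1 + edist n y1 z" by (rule edist_tri)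
    finally show "edist n x z \<le> 5*r" using dx dz d01 edist_sym[of n y1 z] by linarith
    have c1: "\<bar>x 0 - z 0\<bar> \<le> edist n x z" by (rule edist_coord[OF n0])
    have c2: "\<bar>x 0 - y0 0\<bar> < r" using edist_coord[OF n0, of x y0] dx by linarith
    have c3: "\<bar>z 0 - y1 0\<bar> < r" using edist_coord[OF n0, of z y1] dz by linarith
    have c4: "y1 0 = y0 0 + 3*r" by (simp add: y1_def)
    show "r \<le> edist n x z" using c1 c2 c3 c4 by (simp add: abs_less_iff abs_le_iff)
  qed
  have Bfin': "emeasure (Rn n) B' < \<infinity>" unfolding B'_def by (rule vol_bounds(3)[OF n1 r])
  have Efin: "emeasure (Rn n) E < \<infinity>"
    using emeasure_mono[OF Esub eball_sets] Bfin' unfolding B'_def by (simp add: le_less_trans)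
  have muE: "(2*r/n)^n / 2 \<le> measure (Rn n) E"
  proof -
    have "ennreal (measure (Rn n) B' / 2) \<le> ennreal (measure (Rn n) E)"
      using med Efin unfolding B'_def E_def y1_def by (simp add: emeasure_eq_ennreal_measure)
    then have "measure (Rn n) B' / 2 \<le> measure (Rn n) E" by (simp add: ennreal_le_iff)
    moreover have "(2*r/n)^n \<le> measure (Rn n) B'"
      using vol_bounds(1)[OF n1 r, of y1] unfolding B'_def vol_def .
    ultimately show ?thesis by simp
  qed
  define c1 where "c1 = C * (5*r) powr (\<gamma> - real n) * measure (Rn n) E"
  have mE0: "measure (Rn n) E > 0" using muE r n1 by (smt (verit) divide_pos_pos zero_less_power of_nat_0_less_iff n0)
  have c1p: "c1 > 0" unfolding c1_def using C r mE0 by simp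
  have Ems: "indicator E \<in> borel_measurable (Rn n)" using Es by measurable
  have gm: "g \<in> borel_measurable (Rn n)" unfolding g_def by (rule comm_meas[OF bm Ems])
  define H where "H x = ennreal (indicator B x * \<bar>g x\<bar>)" for x
  have Hm: "H \<in> borel_measurable (Rn n)" unfolding H_def B_def using gm by measurable
  have pt: "ennreal (indicator B x * max 0 (b x - m)) \<le> ennreal (1/c1) * H x" for x
  proof (cases "x \<in> B \<and> m \<le> b x")
    case False
    then have z: "indicator B x * max 0 (b x - m) = 0" by (auto simp: indicator_def)
    show ?thesis unfolding z by simp
  next
    case True
    then have xB: "x \<in> B" and bx: "m \<le> b x" by auto
    have xs: "x \<in> space (Rn n)" using xB by (simp add: B_def eball_def)
    have dist': "r \<le> edist n x z \<and> edist n x z \<le> 5*r" if "z \<in> eball n y1 r" for z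
      using dist[OF xB] that by (simp add: B'_def)
    have "C * (5*r) powr (\<gamma> - real n) * measure (Rn n) E * (b x - m) \<le> g x"
      unfolding g_def by (rule comm_lower[OF n1 lb y1s r xs dist' Es Esub Em bx g0 C])
    then have "c1 * (b x - m) \<le> g x" unfolding c1_def .
    then have "b x - m \<le> g x / c1" using c1p by (simp add: field_simps)
    also have "\<dots> \<le> \<bar>g x\<bar> / c1" using c1p by (intro divide_right_mono) auto
    finally have "max 0 (b x - m) \<le> 1/c1 * \<bar>g x\<bar>" using c1p by simp
    then have "ennreal (indicator B x * max 0 (b x - m)) \<le> ennreal (1/c1 * \<bar>g x\<bar>)"
      using xB by (intro ennreal_leI) simp
    also have "\<dots> = ennreal (1/c1) * ennreal \<bar>g x\<bar>" using c1p by (subst ennreal_mult[symmetric]) auto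
    also have "\<dots> = ennreal (1/c1) * H x" using xB by (simp add: H_def)
    finally show ?thesis .
  qed
  have I1: "(\<integral>\<^sup>+x. ennreal (indicator B x * max 0 (b x - m)) \<partial>Rn n) \<le> ennreal (1/c1) * (\<integral>\<^sup>+x. H x \<partial>Rn n)"
  proof -
    have "(\<integral>\<^sup>+x. ennreal (indicator B x * max 0 (b x - m)) \<partial>Rn n) \<le> (\<integral>\<^sup>+x. ennreal (1/c1) * H x \<partial>Rn n)"
      by (intro nn_integral_mono pt)
    also have "\<dots> = ennreal (1/c1) * (\<integral>\<^sup>+x. H x \<partial>Rn n)" using Hm by (simp add: nn_integral_cmult)
    finally show ?thesis .
  qed
  define Lam where "Lam = (\<Prod>i<n. ((y0 i + r) - (y0 i - r)) powr (1 - 1 / enn2real (q i)))"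
  define N where "N = mixed_norm n q H"
  have I2: "(\<integral>\<^sup>+x. H x \<partial>Rn n) \<le> ennreal Lam * N"
    unfolding Lam_def N_def
  proof (rule holder_total[OF Hm _ _ qq])
    show "\<forall>i<n. y0 i - r < y0 i + r" using r by simp
    fix x assume "\<exists>i<n. x i \<notin> {y0 i - r<..<y0 i + r}"
    then have "x \<notin> B" using eball_sub_box[of n y0 r] unfolding B_def by (auto simp: PiE_def Pi_def)
    then show "H x = 0" by (simp add: H_def)
  qed
  have Lam_e: "Lam = 2 powr (real n - (\<Sum>i<n. inv_exp (q i))) * r powr (real n - (\<Sum>i<n. inv_exp (q i)))"
    unfolding Lam_def by (rule Lam_eq[OF r qq])
  have Lam0: "Lam \<ge> 0" unfolding Lam_e by simp
  have pp0: "\<forall>i<n. 0 < p i" using pp by (auto intro: less_trans[OF zero_less_one])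
  have ss0: "\<forall>i<n. 0 < s i" using ss by (auto intro: less_trans[OF zero_less_one])
  define U0 where "U0 = max (real n powr (-(real n/\<alpha> - (\<Sum>i<n. inv_exp (p i)) - (\<Sum>i<n. inv_exp (s i))))) 1
             * 2 powr (real n/\<alpha> + (\<Sum>i<n. inv_exp (s i)))"
  define U where "U = U0 * r powr (real n / \<alpha>)"
  have U00: "U0 \<ge> 0" unfolding U0_def by (simp add: le_max_iff_disj)
  have U0': "U \<ge> 0" unfolding U_def using U00 by simp
  have Ap: "amalgam_norm n p s \<alpha> (indicator E) \<le> ennreal U"
    unfolding U_def U0_def by (rule amalgam_ind_bound[OF n1 r Es Esub pp0 ss0 a1 a2])
  have inE: "in_amalgam n p s \<alpha> (indicator E)"
    unfolding in_amalgam_def using ind_loc_int[OF n1 Es] Ap by (simp add: le_less_trans)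
  define K' where "K' = max K 0"
  have K'0: "K' \<ge> 0" unfolding K'_def by simp
  have Aq: "amalgam_norm n q s \<beta> g \<le> ennreal (K' * U)"
  proof -
    have "amalgam_norm n q s \<beta> g \<le> ennreal K * amalgam_norm n p s \<alpha> (indicator E)"
      using Kh inE unfolding g_def by blast
    also have "\<dots> \<le> ennreal K' * ennreal U"
      unfolding K'_def by (intro mult_mono ennreal_leI Ap) auto
    also have "\<dots> = ennreal (K' * U)" using K'0 U0' by (simp add: ennreal_mult)
    finally show ?thesis .
  qed
  define L0 where "L0 = 4 powr (real n/\<beta> - (\<Sum>i<n. inv_exp (q i)) - (\<Sum>i<n. inv_exp (s i))) * min (real n powr (-(real n/\<beta> - (\<Sum>i<n. inv_exp (q i)) - (\<Sum>i<n. inv_exp (s i))))) 1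
       * (2 / real n) powr (\<Sum>i<n. inv_exp (s i))"
  define Lt where "Lt = min (((4*r/n)^n) powr (1/\<beta> - avg_inv n q - avg_inv n s)) (((4*r)^n) powr (1/\<beta> - avg_inv n q - avg_inv n s))
      * (\<Prod>i<n. (2*r/n) powr inv_exp (s i))"
  have Lt_e: "Lt = L0 * r powr (real n/\<beta> - (\<Sum>i<n. inv_exp (q i)))"
    unfolding Lt_def L0_def by (rule Lterm_eq[OF n1 r])
  have L0p: "L0 > 0" unfolding L0_def using n1 by simp
  have Ltp: "Lt > 0" unfolding Lt_e using L0p r by simp
  have test: "ennreal (c * Lt) \<le> amalgam_norm n q s \<beta> g" if c0: "c \<ge> 0" and cle: "ennreal c \<le> N" for c
  proof -
    have cle': "ennreal c \<le> mixed_norm n q (\<lambda>x. ennreal (indicator (eball n y0 r) x * \<bar>g x\<bar>))"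
      using cle unfolding N_def H_def B_def .
    from amalgam_lower[OF n1 r gm ss0 c0 cle', of \<beta>]
    show ?thesis unfolding Lt_def by (simp add: mult.assoc)
  qed
  have NB: "N \<le> ennreal (K' * U / Lt)"
    by (rule ennreal_bound_from_test[OF Ltp _ Aq test]) (use K'0 U0' in auto)
  have "(\<integral>\<^sup>+x. ennreal (indicator B x * max 0 (b x - m)) \<partial>Rn n) \<le> ennreal (1/c1) * (ennreal Lam * ennreal (K' * U / Lt))"
    using I1 I2 NB by (meson order_trans mult_left_mono zero_le)
  also have "\<dots> = ennreal (Lam * (K' * U / Lt) / c1)"
    using c1p Lam0 K'0 U0' Ltp by (simp add: ennreal_mult[symmetric] del: ennreal_mult)
  also have "\<dots> \<le> ennreal (T0c n p q s \<alpha> \<beta> \<gamma> C K * r powr real n)"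
  proof (rule ennreal_leI)
    define c1' where "c1' = C * 5 powr (\<gamma> - real n) * (2 / real n)^n / 2"
    have c1'p: "c1' > 0" unfolding c1'_def using C n1 by simp
    have c1b: "c1 \<ge> c1' * r powr \<gamma>"
    proof -
      have "c1' * r powr \<gamma> = C * (5 powr (\<gamma> - real n) * r powr (\<gamma> - real n)) * ((2 / real n)^n * r powr real n) / 2"
        unfolding c1'_def using r by (simp add: powr_add[symmetric] field_simps)
      also have "\<dots> = C * (5*r) powr (\<gamma> - real n) * ((2*r/real n)^n / 2)"
        using r by (simp add: powr_mult powr_realpow power_mult_distrib field_simps)
      also have "\<dots> \<le> c1" unfolding c1_def using muE C r by (intro mult_left_mono) auto
      finally show ?thesis .
    qed
    have "Lam * (K' * U / Lt) / c1 \<le> (2 powr (real n - (\<Sum>i<n. inv_exp (q i))) * K' * U0 / (c1' * L0)) * r powr real n"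
      by (rule final_alg[OF r c1b c1'p Lt_e L0p Lam_e U_def K'0 U00 gam])
    also have "2 powr (real n - (\<Sum>i<n. inv_exp (q i))) * K' * U0 / (c1' * L0) = T0c n p q s \<alpha> \<beta> \<gamma> C K"
      unfolding T0c_def K'_def U0_def c1'_def L0_def ..
    finally show "Lam * (K' * U / Lt) / c1 \<le> T0c n p q s \<alpha> \<beta> \<gamma> C K * r powr real n" .
  qed
  finally show ?thesis unfolding B_def .
qed

lemma comm_neg: "commutator n C \<gamma> (\<lambda>x. - b x) f x = - commutator n C \<gamma> b f x"
proof -
  have "(\<lambda>y. (- b x - - b y) * f y / edist n x y powr (real n - \<gamma>)) = (\<lambda>y. - ((b x - b y) * f y / edist n x y powr (real n - \<gamma>)))"
  proof
    fix y show "(- b x - - b y) * f y / edist n x y powr (real n - \<gamma>) = - ((b x - b y) * f y / edist n x y powr (real n - \<gamma>))"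
    proof -
      have "(- b x - - b y) * f y = - ((b x - b y) * f y)" by (simp add: algebra_simps)
      then show ?thesis by (simp only: minus_divide_left)
    qed
  qed
  then show ?thesis unfolding commutator_def by simp
qed

lemma amalgam_neg: "amalgam_norm n p s \<alpha> (\<lambda>x. - h x) = amalgam_norm n p s \<alpha> h"
  by (simp add: amalgam_norm_def)

lemma loc_int_neg: "loc_int n b \<Longrightarrow> loc_int n (\<lambda>x. - b x)"
  unfolding loc_int_def set_integrable_def by simp

lemma Kneg:
  assumes "\<forall>f. in_amalgam n p s \<alpha> f \<longrightarrow> amalgam_norm n q s \<beta> (commutator n C \<gamma> b f) \<le> ennreal K * amalgam_norm n p s \<alpha> f"
  shows "\<forall>f. in_amalgam n p s \<alpha> f \<longrightarrow> amalgam_norm n q s \<beta> (commutator n C \<gamma> (\<lambda>x. - b x) f) \<le> ennreal K * amalgam_norm n p s \<alpha> f"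
proof (intro allI impI)
  fix f assume "in_amalgam n p s \<alpha> f"
  then have "amalgam_norm n q s \<beta> (commutator n C \<gamma> b f) \<le> ennreal K * amalgam_norm n p s \<alpha> f" using assms by blast
  moreover have "commutator n C \<gamma> (\<lambda>x. - b x) f = (\<lambda>x. - commutator n C \<gamma> b f x)"
    by (rule ext) (rule comm_neg)
  ultimately show "amalgam_norm n q s \<beta> (commutator n C \<gamma> (\<lambda>x. - b x) f) \<le> ennreal K * amalgam_norm n p s \<alpha> f"
    by (simp add: amalgam_neg)
qed

lemma ball_L1_bound:
  assumes n1: "n \<ge> 1" and lb: "loc_int n b" and y0: "y0 \<in> space (Rn n)" and r: "r > 0" and T0: "T \<ge> 0"
    and h: "(\<integral>\<^sup>+x. ennreal (indicator (eball n y0 r) x * \<bar>b x - m\<bar>) \<partial>Rn n) \<le> ennreal (2 * T * r ^ n)"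
  shows "(1 / vol n (eball n y0 r)) * (\<integral>x\<in>eball n y0 r. \<bar>b x - ball_avg n b (eball n y0 r)\<bar> \<partial>Rn n) \<le> 4 * T * (real n / 2)^n"
proof -
  define B where "B = eball n y0 r"
  define a where "a = ball_avg n b B"
  define f where "f x = indicator B x * \<bar>b x - m\<bar>" for x
  have Bs: "B \<in> sets (Rn n)" unfolding B_def by simp
  have Bfin: "emeasure (Rn n) B < \<infinity>" unfolding B_def by (rule vol_bounds(3)[OF n1 r])
  have bi: "integrable (Rn n) (\<lambda>x. indicator B x * b x)"
    using lb y0 r unfolding loc_int_def set_integrable_def B_def by auto
  have Bi: "integrable (Rn n) (\<lambda>x. indicator B x :: real)" using Bs Bfin by simp
  have feq: "f = (\<lambda>x. \<bar>indicator B x * b x - m * indicator B x\<bar>)"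
    unfolding f_def by (auto simp: indicator_def)
  have fi: "integrable (Rn n) f" unfolding feq using bi Bi by auto
  have f0: "\<And>x. 0 \<le> f x" unfolding f_def by simp
  have "ennreal (integral\<^sup>L (Rn n) f) = (\<integral>\<^sup>+x. ennreal (f x) \<partial>Rn n)"
    using fi f0 by (simp add: nn_integral_eq_integral)
  also have "\<dots> \<le> ennreal (2 * T * r ^ n)" using h unfolding f_def B_def .
  finally have If: "integral\<^sup>L (Rn n) f \<le> 2 * T * r ^ n" using T0 r by (simp add: ennreal_le_iff)
  define mu where "mu = measure (Rn n) B"
  have vB: "vol n B = mu" by (simp add: vol_def mu_def)
  have mulo: "(2*r/n)^n \<le> mu" using vol_bounds(1)[OF n1 r, of y0] unfolding vB[symmetric] B_def .
  have "0 < (2*r/n)^n" using r n1 by simp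
  then have mup: "mu > 0" using mulo by linarith
  have intb: "(\<integral>x\<in>B. b x \<partial>Rn n) = integral\<^sup>L (Rn n) (\<lambda>x. indicator B x * b x)"
    by (simp add: set_lebesgue_integral_def)
  have aeq: "a * mu = integral\<^sup>L (Rn n) (\<lambda>x. indicator B x * b x)"
    unfolding a_def ball_avg_def vB intb using mup by simp
  have Imu: "integral\<^sup>L (Rn n) (\<lambda>x. indicator B x :: real) = mu"
    using Bs by (simp add: mu_def Int_absorb2 sets.sets_into_space)
  have "\<bar>m - a\<bar> * mu = \<bar>m * mu - a * mu\<bar>" using mup by (simp add: abs_mult_pos' left_diff_distrib[symmetric] abs_mult)
  also have "m * mu - a * mu = integral\<^sup>L (Rn n) (\<lambda>x. m * indicator B x - indicator B x * b x)"
  proof -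
    have Imu2: "measure (Rn n) (B \<inter> space (Rn n)) = mu"
      using Bs by (simp add: mu_def Int_absorb2 sets.sets_into_space)
    show ?thesis using bi Bi by (simp add: aeq Imu2)
  qed
  also have "\<bar>\<dots>\<bar> \<le> integral\<^sup>L (Rn n) (\<lambda>x. \<bar>m * indicator B x - indicator B x * b x\<bar>)"
    by (rule integral_abs_bound)
  also have "\<dots> = integral\<^sup>L (Rn n) f"
    unfolding f_def by (intro Bochner_Integration.integral_cong) (auto simp: indicator_def abs_minus_commute)
  finally have ma: "\<bar>m - a\<bar> * mu \<le> integral\<^sup>L (Rn n) f" .
  have sI: "(\<integral>x\<in>B. \<bar>b x - a\<bar> \<partial>Rn n) = integral\<^sup>L (Rn n) (\<lambda>x. indicator B x * \<bar>b x - a\<bar>)"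
    by (simp add: set_lebesgue_integral_def)
  have gi: "integrable (Rn n) (\<lambda>x. indicator B x * \<bar>b x - a\<bar>)"
  proof -
    have "(\<lambda>x. indicator B x * \<bar>b x - a\<bar>) = (\<lambda>x. \<bar>indicator B x * b x - a * indicator B x\<bar>)"
      by (auto simp: indicator_def)
    then show ?thesis using bi Bi by auto
  qed
  have "(\<integral>x\<in>B. \<bar>b x - a\<bar> \<partial>Rn n) \<le> integral\<^sup>L (Rn n) (\<lambda>x. f x + \<bar>m - a\<bar> * indicator B x)"
    unfolding sI
  proof (rule integral_mono[OF gi])
    show "integrable (Rn n) (\<lambda>x. f x + \<bar>m - a\<bar> * indicator B x)" using fi Bi by auto
    fix x show "indicator B x * \<bar>b x - a\<bar> \<le> f x + \<bar>m - a\<bar> * indicator B x"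
      unfolding f_def by (auto simp: indicator_def)
  qed
  also have "\<dots> = integral\<^sup>L (Rn n) f + \<bar>m - a\<bar> * mu"
    using fi Bi Imu by simp
  also have "\<dots> \<le> 2 * integral\<^sup>L (Rn n) f" using ma by simp
  also have "\<dots> \<le> 4 * T * r ^ n" using If by simp
  finally have main: "(\<integral>x\<in>B. \<bar>b x - a\<bar> \<partial>Rn n) \<le> 4 * T * r ^ n" .
  have "(1 / mu) * (\<integral>x\<in>B. \<bar>b x - a\<bar> \<partial>Rn n) \<le> (1 / mu) * (4 * T * r ^ n)"
    using main mup by (intro mult_left_mono) auto
  also have "\<dots> \<le> (1 / (2*r/n)^n) * (4 * T * r ^ n)"
    using mulo mup T0 r n1 by (intro mult_right_mono divide_left_mono) auto
  also have "\<dots> = 4 * T * (real n / 2)^n"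
    using r n1 by (simp add: power_divide power_mult_distrib field_simps)
  finally show ?thesis unfolding vB[symmetric] a_def B_def .
qed

theorem theorem2p11:
  fixes n :: nat and \<gamma> \<alpha> \<beta> C :: real
    and p q s :: "nat \<Rightarrow> ennreal"
    and b :: "(nat \<Rightarrow> real) \<Rightarrow> real"
  assumes "0 < \<gamma>" "\<gamma> < real n"
    and "C > 0" "\<alpha> > 0" "\<beta> > 0"
    and "\<forall>i<n. 1 < p i \<and> p i < \<infinity>"
    and "\<forall>i<n. 1 < q i \<and> q i < \<infinity>"
    and "\<forall>i<n. 1 < s i"
    and "avg_inv n s \<le> 1 / \<alpha>" "1 / \<alpha> \<le> avg_inv n p"
    and "avg_inv n s \<le> 1 / \<beta>" "1 / \<beta> \<le> avg_inv n q"
    and "\<gamma> = (\<Sum>i<n. inv_exp (p i)) - (\<Sum>i<n. inv_exp (q i))"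
    and "\<gamma> = real n / \<alpha> - real n / \<beta>"
    and "loc_int n b"
    and "\<exists>K::real. \<forall>f. in_amalgam n p s \<alpha> f \<longrightarrow>
           amalgam_norm n q s \<beta> (commutator n C \<gamma> b f) \<le> ennreal K * amalgam_norm n p s \<alpha> f"
  shows "BMO n b"
proof -
  have n1: "n \<ge> 1" using assms(1,2) by simp
  have g0: "\<gamma> < real n" using assms(2) .
  have C: "C > 0" using assms(3) .
  have pp: "\<forall>i<n. 1 < p i \<and> p i < \<infinity>" using assms(6) .
  have qq: "\<forall>i<n. 1 < q i \<and> q i < \<infinity>" using assms(7) .
  have ss: "\<forall>i<n. 1 < s i" using assms(8) .
  have a1: "avg_inv n s \<le> 1 / \<alpha>" using assms(9) .
  have a2: "1 / \<alpha> \<le> avg_inv n p" using assms(10) .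
  have gam: "\<gamma> = real n / \<alpha> - real n / \<beta>" using assms(14) .
  have lb: "loc_int n b" using assms(15) .
  obtain K where Kh: "\<forall>f. in_amalgam n p s \<alpha> f \<longrightarrow>
           amalgam_norm n q s \<beta> (commutator n C \<gamma> b f) \<le> ennreal K * amalgam_norm n p s \<alpha> f"
    using assms(16) by blast
  have Kh': "\<forall>f. in_amalgam n p s \<alpha> f \<longrightarrow>
           amalgam_norm n q s \<beta> (commutator n C \<gamma> (\<lambda>x. - b x) f) \<le> ennreal K * amalgam_norm n p s \<alpha> f"
    by (rule Kneg[OF Kh])
  have lb': "loc_int n (\<lambda>x. - b x)" by (rule loc_int_neg[OF lb])
  have bm: "b \<in> borel_measurable (Rn n)" by (rule loc_int_meas[OF lb])
  define T where "T = max (T0c n p q s \<alpha> \<beta> \<gamma> C K) 0"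
  have T0: "T \<ge> 0" unfolding T_def by simp
  have key: "(1 / vol n (eball n y0 r)) * (\<integral>x\<in>eball n y0 r. \<bar>b x - ball_avg n b (eball n y0 r)\<bar> \<partial>Rn n) \<le> 4 * T * (real n / 2)^n"
    if y0: "y0 \<in> space (Rn n)" and r: "r > 0" for y0 r
  proof -
    define y1 where "y1 = y0(0 := y0 0 + 3*r)"
    define B' where "B' = eball n y1 r"
    have Bs': "B' \<in> sets (Rn n)" unfolding B'_def by simp
    have Bfin': "emeasure (Rn n) B' < \<infinity>" unfolding B'_def by (rule vol_bounds(3)[OF n1 r])
    obtain m where m1: "ennreal (measure (Rn n) B' / 2) \<le> emeasure (Rn n) {x\<in>B'. b x \<le> m}"
      and m2: "ennreal (measure (Rn n) B' / 2) \<le> emeasure (Rn n) {x\<in>B'. m \<le> b x}"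
      using median_exists[OF bm Bs' Bfin'] by blast
    have rn: "r powr real n = r ^ n" using r by (simp add: powr_realpow)
    have Tle: "ennreal (T0c n p q s \<alpha> \<beta> \<gamma> C K * r powr real n) \<le> ennreal (T * r ^ n)"
      unfolding rn T_def using r by (intro ennreal_leI mult_right_mono) auto
    have h1: "(\<integral>\<^sup>+x. ennreal (indicator (eball n y0 r) x * max 0 (b x - m)) \<partial>Rn n) \<le> ennreal (T * r ^ n)"
      using half_bound[OF n1 g0 C pp qq ss a1 a2 gam lb Kh y0 r m1[unfolded B'_def y1_def]] Tle
      by (rule order_trans)
    have m2': "ennreal (measure (Rn n) (eball n (y0(0 := y0 0 + 3*r)) r) / 2) \<le> emeasure (Rn n) {z \<in> eball n (y0(0 := y0 0 + 3*r)) r. - b z \<le> - m}"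
      using m2 unfolding B'_def y1_def by simp
    have h2: "(\<integral>\<^sup>+x. ennreal (indicator (eball n y0 r) x * max 0 (- b x - - m)) \<partial>Rn n) \<le> ennreal (T * r ^ n)"
      using half_bound[OF n1 g0 C pp qq ss a1 a2 gam lb' Kh' y0 r m2'] Tle
      by (rule order_trans)
    have bmeas: "(\<lambda>x. ennreal (indicator (eball n y0 r) x * max 0 (b x - m))) \<in> borel_measurable (Rn n)"
      using bm by measurable
    have bmeas2: "(\<lambda>x. ennreal (indicator (eball n y0 r) x * max 0 (- b x - - m))) \<in> borel_measurable (Rn n)"
      using bm by measurable
    have "(\<integral>\<^sup>+x. ennreal (indicator (eball n y0 r) x * \<bar>b x - m\<bar>) \<partial>Rn n)
        = (\<integral>\<^sup>+x. ennreal (indicator (eball n y0 r) x * max 0 (b x - m)) + ennreal (indicator (eball n y0 r) x * max 0 (- b x - - m)) \<partial>Rn n)"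
      by (intro nn_integral_cong) (auto simp: indicator_def ennreal_plus[symmetric] simp del: ennreal_plus)
    also have "\<dots> = (\<integral>\<^sup>+x. ennreal (indicator (eball n y0 r) x * max 0 (b x - m)) \<partial>Rn n) + (\<integral>\<^sup>+x. ennreal (indicator (eball n y0 r) x * max 0 (- b x - - m)) \<partial>Rn n)"
      by (rule nn_integral_add[OF bmeas bmeas2])
    also have "\<dots> \<le> ennreal (T * r ^ n) + ennreal (T * r ^ n)" by (rule add_mono[OF h1 h2])
    also have "\<dots> = ennreal (2 * T * r ^ n)" using T0 r by (simp add: ennreal_plus[symmetric] del: ennreal_plus)
    finally have h: "(\<integral>\<^sup>+x. ennreal (indicator (eball n y0 r) x * \<bar>b x - m\<bar>) \<partial>Rn n) \<le> ennreal (2 * T * r ^ n)" .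
    show ?thesis by (rule ball_L1_bound[OF n1 lb y0 r T0 h])
  qed
  show ?thesis unfolding BMO_def
    using lb key by blast
qed

end
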